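(* Let $S$ be a nonempty set, $G$ a group of permutations of $S$, and $s\in S$. Then $SV_G$ is generated by $SV\cup\iota_1^s(G)$.
   Context: Let $\mathfrak C=\{0,1\}^{\omega}$ be the Cantor set, $S$ a nonempty set, and $G$ a subgroup of the symmetric group of $S$. Let $\mathfrak C^S$ be the space of all functions $S\to\mathfrak C$ with the product topology. For a function $\psi\colon S\to\{0,1\}^*$ with $\psi(s)=\varnothing$ for all but finitely many $s$, the dyadic brick $B(\psi)$ is the set of $\kappa\in\mathfrak C^S$ such that $\psi(s)$ is a prefix of $\kappa(s)$ for all $s\in S$; the canonical homeomorphism $\Phi_\psi\colon\mathfrak C^S\to B(\psi)$ is $\Phi_\psi(\kappa)(s)=\psi(s)\cdot\kappa(s)$. For $\gamma\in G$ let $\tau_\gamma(\kappa)(s)=\kappa(\gamma^{-1}s)$. The twist homeomorphism $B(\varphi)\to B(\psi)$ associated to $\gamma$ is $\Phi_\psi\circ\tau_\gamma\circ\Phi_\varphi^{-1}$. The twisted Brin–Thompson group $SV_G$ is the group of all homeomorphisms $h$ of $\mathfrak C^S$ for which there exist two partitions $B(\varphi_1),\dots,B(\varphi_n)$ and $B(\psi_1),\dots,B(\psi_n)$ of $\mathfrak C^S$ into dyadic bricks and $\gamma_1,\dots,\gamma_n\in G$ such that $h|_{B(\varphi_i)}$ is the twist homeomorphism $B(\varphi_i)\to B(\psi_i)$ associated to $\gamma_i$. $SV$ denotes the subgroup obtained when all $\gamma_i$ are required to be trivial (the Brin–Thompson group). For $s\in S$ let $\psi_s\colon S\to\{0,1\}^*$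 be given by $\psi_s(s)=1$ and $\psi_s(t)=\varnothing$ for $t\neq s$, and define $\iota_1^s\colon G\to SV_G$ by letting $\iota_1^s(\gamma)$ be the identity on $\{\kappa:\kappa(s)\text{ begins with }0\}$ and equal to $\Phi_{\psi_s}\circ\tau_\gamma\circ\Phi_{\psi_s}^{-1}$ on $B(\psi_s)$. *)

theory Defs
  imports "HOL-Analysis.Analysis" "HOL-Algebra.Bij" "HOL-Algebra.Generated_Groups"
begin

text \<open>The Cantor set C = {0,1}^omega, points are bool sequences (False = 0, True = 1),
  with the product of discrete topologies. Points of C^S are functions S => C; the set S
  is the (nonempty) universe of the type variable 'a.\<close>

definition cantor_top :: "(nat \<Rightarrow> bool) topology" where
  "cantor_top = product_topology (\<lambda>_. discrete_topology (UNIV :: bool set)) UNIV"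

definition cube_top :: "('a \<Rightarrow> nat \<Rightarrow> bool) topology" where
  "cube_top = product_topology (\<lambda>_. cantor_top) UNIV"

definition fin_supp :: "('a \<Rightarrow> bool list) \<Rightarrow> bool" where
  "fin_supp \<psi> \<longleftrightarrow> finite {s. \<psi> s \<noteq> []}"

definition is_prefix :: "bool list \<Rightarrow> (nat \<Rightarrow> bool) \<Rightarrow> bool" where
  "is_prefix w x \<longleftrightarrow> (\<forall>i<length w. x i = w ! i)"

definition brick :: "('a \<Rightarrow> bool list) \<Rightarrow> ('a \<Rightarrow> nat \<Rightarrow> bool) set" where
  "brick \<psi> = {\<kappa>. \<forall>s. is_prefix (\<psi> s) (\<kappa> s)}"

definition concat_seq :: "bool list \<Rightarrow> (nat \<Rightarrow> bool) \<Rightarrow> (nat \<Rightarrow> bool)" where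
  "concat_seq w x = (\<lambda>i. if i < length w then w ! i else x (i - length w))"

definition Phi :: "('a \<Rightarrow> bool list) \<Rightarrow> ('a \<Rightarrow> nat \<Rightarrow> bool) \<Rightarrow> ('a \<Rightarrow> nat \<Rightarrow> bool)" where
  "Phi \<psi> \<kappa> = (\<lambda>s. concat_seq (\<psi> s) (\<kappa> s))"

definition Phi_inv :: "('a \<Rightarrow> bool list) \<Rightarrow> ('a \<Rightarrow> nat \<Rightarrow> bool) \<Rightarrow> ('a \<Rightarrow> nat \<Rightarrow> bool)" where
  "Phi_inv \<psi> \<kappa> = (\<lambda>s i. \<kappa> s (i + length (\<psi> s)))"

definition tau :: "('a \<Rightarrow> 'a) \<Rightarrow> ('a \<Rightarrow> nat \<Rightarrow> bool) \<Rightarrow> ('a \<Rightarrow> nat \<Rightarrow> bool)" where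
  "tau \<gamma> \<kappa> = (\<lambda>s. \<kappa> (Hilbert_Choice.inv \<gamma> s))"

definition twist :: "('a \<Rightarrow> bool list) \<Rightarrow> ('a \<Rightarrow> bool list) \<Rightarrow> ('a \<Rightarrow> 'a)
    \<Rightarrow> ('a \<Rightarrow> nat \<Rightarrow> bool) \<Rightarrow> ('a \<Rightarrow> nat \<Rightarrow> bool)" where
  "twist \<phi> \<psi> \<gamma> = Phi \<psi> \<circ> tau \<gamma> \<circ> Phi_inv \<phi>"

definition brick_partition :: "(nat \<Rightarrow> 'a \<Rightarrow> bool list) \<Rightarrow> nat \<Rightarrow> bool" where
  "brick_partition \<phi> n \<longleftrightarrow>
     (\<forall>i<n. fin_supp (\<phi> i)) \<and>
     (\<forall>i<n. \<forall>j<n. i \<noteq> j \<longrightarrow> brick (\<phi> i) \<inter> brick (\<phi> j) = {}) \<and>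
     (\<Union>i<n. brick (\<phi> i)) = UNIV"

definition SVG :: "('a \<Rightarrow> 'a) set \<Rightarrow> (('a \<Rightarrow> nat \<Rightarrow> bool) \<Rightarrow> ('a \<Rightarrow> nat \<Rightarrow> bool)) set" where
  "SVG G = {h. homeomorphic_map cube_top cube_top h \<and>
     (\<exists>n \<phi> \<psi> \<gamma>. brick_partition \<phi> n \<and> brick_partition \<psi> n \<and> (\<forall>i<n. \<gamma> i \<in> G) \<and>
        (\<forall>i<n. \<forall>\<kappa>\<in>brick (\<phi> i). h \<kappa> = twist (\<phi> i) (\<psi> i) (\<gamma> i) \<kappa>))}"

definition SV :: "(('a \<Rightarrow> nat \<Rightarrow> bool) \<Rightarrow> ('a \<Rightarrow> nat \<Rightarrow> bool)) set" where
  "SV = SVG {id}"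

definition psi_s :: "'a \<Rightarrow> 'a \<Rightarrow> bool list" where
  "psi_s s = (\<lambda>t. if t = s then [True] else [])"

definition iota1 :: "'a \<Rightarrow> ('a \<Rightarrow> 'a) \<Rightarrow> ('a \<Rightarrow> nat \<Rightarrow> bool) \<Rightarrow> ('a \<Rightarrow> nat \<Rightarrow> bool)" where
  "iota1 s \<gamma> \<kappa> = (if \<kappa> s 0 = False then \<kappa>
                   else (Phi (psi_s s) \<circ> tau \<gamma> \<circ> Phi_inv (psi_s s)) \<kappa>)"

end

theory Submission
  imports Defs
begin


abbreviation hinv where "hinv \<equiv> Hilbert_Choice.inv"

lemma concat_seq_prefix: "is_prefix w (concat_seq w x)"
  by (simp add: is_prefix_def concat_seq_def)

lemma brick_Phi: "Phi \<psi> \<kappa> \<in> brick \<psi>"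
  by (simp add: brick_def Phi_def concat_seq_prefix)

lemma Phi_inv_Phi: "Phi_inv \<psi> (Phi \<psi> \<kappa>) = \<kappa>"
  by (auto simp: Phi_inv_def Phi_def concat_seq_def)

lemma Phi_Phi_inv: "\<kappa> \<in> brick \<psi> \<Longrightarrow> Phi \<psi> (Phi_inv \<psi> \<kappa>) = \<kappa>"
  by (auto simp: Phi_inv_def Phi_def concat_seq_def brick_def is_prefix_def fun_eq_iff)

lemma twist_apply: "twist \<phi> \<psi> \<gamma> \<kappa> u i =
  (if i < length (\<psi> u) then \<psi> u ! i
   else \<kappa> (hinv \<gamma> u) (i - length (\<psi> u) + length (\<phi> (hinv \<gamma> u))))"
  by (simp add: twist_def Phi_def Phi_inv_def tau_def concat_seq_def)

lemma twist_in: "twist \<phi> \<psi> \<gamma> \<kappa> \<in> brick \<psi>"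
  by (simp add: twist_def brick_Phi)

lemma tau_comp: "bij \<gamma> \<Longrightarrow> bij \<delta> \<Longrightarrow> tau \<delta> (tau \<gamma> x) = tau (\<delta> \<circ> \<gamma>) x"
  by (simp add: tau_def o_inv_distrib)

lemma tau_id: "tau id x = x"
  by (simp add: tau_def inv_id)

lemma twist_comp: "bij \<gamma> \<Longrightarrow> bij \<delta> \<Longrightarrow>
   twist b c \<delta> (twist a b \<gamma> \<kappa>) = twist a c (\<delta> \<circ> \<gamma>) \<kappa>"
  by (simp add: twist_def Phi_inv_Phi tau_comp)

lemma twist_same_id: "\<kappa> \<in> brick \<phi> \<Longrightarrow> twist \<phi> \<phi> id \<kappa> = \<kappa>"
  by (simp add: twist_def tau_id Phi_Phi_inv)

lemma twist_inv: "bij \<gamma> \<Longrightarrow> \<kappa> \<in> brick \<phi> \<Longrightarrow> twist \<psi> \<phi> (hinv \<gamma>) (twist \<phi> \<psi> \<gamma> \<kappa>) = \<kappa>"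
  by (simp add: twist_comp bij_imp_bij_inv bij_is_inj twist_same_id)

definition pfx :: "bool list \<Rightarrow> bool list \<Rightarrow> bool" where
  "pfx w v \<longleftrightarrow> take (length w) v = w"

lemma pfx_len: "pfx w v \<Longrightarrow> length w \<le> length v"
  unfolding pfx_def by (metis length_take min.cobounded1 min_def)

lemma pfx_nth: "pfx w v \<Longrightarrow> i < length w \<Longrightarrow> v ! i = w ! i"
  unfolding pfx_def by (metis nth_take)

lemma brick_mono: "(\<And>u. pfx (\<phi> u) (\<theta> u)) \<Longrightarrow> brick \<theta> \<subseteq> brick \<phi>"
  unfolding brick_def is_prefix_def
  by (smt (verit, ccfv_SIG) mem_Collect_eq order_less_le_trans pfx_len pfx_nth subsetI)

definition extn :: "('a \<Rightarrow> bool list) \<Rightarrow> ('a \<Rightarrow> bool list) \<Rightarrow> ('a \<Rightarrow> 'a) \<Rightarrow> ('a \<Rightarrow> bool list) \<Rightarrow> 'a \<Rightarrow> bool list" where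
  "extn \<phi> \<psi> \<gamma> \<theta> u = \<psi> u @ drop (length (\<phi> (hinv \<gamma> u))) (\<theta> (hinv \<gamma> u))"

lemma pfx_extn: "pfx (\<psi> u) (extn \<phi> \<psi> \<gamma> \<theta> u)"
  by (simp add: pfx_def extn_def)

lemma twist_restrict:
  assumes "\<And>u. pfx (\<phi> u) (\<theta> u)" "\<kappa> \<in> brick \<theta>"
  shows "twist \<phi> \<psi> \<gamma> \<kappa> = twist \<theta> (extn \<phi> \<psi> \<gamma> \<theta>) \<gamma> \<kappa>"
proof (rule ext, rule ext)
  fix u i
  define t where "t = hinv \<gamma> u"
  have le: "length (\<phi> t) \<le> length (\<theta> t)" using assms(1) pfx_len by blast
  have pk: "\<And>j. j < length (\<theta> t) \<Longrightarrow> \<kappa> t j = \<theta> t ! j"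
    using assms(2) by (simp add: brick_def is_prefix_def)
  show "twist \<phi> \<psi> \<gamma> \<kappa> u i = twist \<theta> (extn \<phi> \<psi> \<gamma> \<theta>) \<gamma> \<kappa> u i"
  proof (cases "i < length (\<psi> u)")
    case True then show ?thesis by (simp add: twist_apply extn_def nth_append)
  next
    case False
    define j where "j = i - length (\<psi> u) + length (\<phi> t)"
    have L: "twist \<phi> \<psi> \<gamma> \<kappa> u i = \<kappa> t j"
      using False by (simp add: twist_apply t_def[symmetric] j_def)
    have len: "length (extn \<phi> \<psi> \<gamma> \<theta> u) = length (\<psi> u) + (length (\<theta> t) - length (\<phi> t))"
      by (simp add: extn_def t_def[symmetric])
    show ?thesis
    proof (cases "j < length (\<theta> t)")
      case True
      then have "i < length (extn \<phi> \<psi> \<gamma> \<theta> u)" using len j_def False le by linarith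
      moreover have "extn \<phi> \<psi> \<gamma> \<theta> u ! i = \<theta> t ! j"
        using False le True by (simp add: extn_def t_def[symmetric] nth_append j_def add.commute)
      ultimately show ?thesis using L pk[OF True] by (simp add: twist_apply)
    next
      case F2: False
      then have "\<not> i < length (extn \<phi> \<psi> \<gamma> \<theta> u)" using len j_def False le by linarith
      moreover have "i - length (extn \<phi> \<psi> \<gamma> \<theta> u) + length (\<theta> t) = j"
        using len j_def False le F2 by linarith
      ultimately show ?thesis using L by (simp add: twist_apply t_def[symmetric])
    qed
  qed
qed

lemma fin_supp_extn:
  assumes "fin_supp \<psi>" "fin_supp \<theta>" "bij \<gamma>"
  shows "fin_supp (extn \<phi> \<psi> \<gamma> \<theta>)"
proof -
  have "{u. extn \<phi> \<psi> \<gamma> \<theta> u \<noteq> []} \<subseteq> {u. \<psi> u \<noteq> []} \<union> \<gamma> ` {t. \<theta> t \<noteq> []}"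
  proof
    fix u assume "u \<in> {u. extn \<phi> \<psi> \<gamma> \<theta> u \<noteq> []}"
    then have "\<psi> u \<noteq> [] \<or> \<theta> (hinv \<gamma> u) \<noteq> []" by (auto simp: extn_def)
    moreover have "u = \<gamma> (hinv \<gamma> u)" using assms(3) by (simp add: bij_is_surj surj_f_inv_f)
    ultimately show "u \<in> {u. \<psi> u \<noteq> []} \<union> \<gamma> ` {t. \<theta> t \<noteq> []}" by blast
  qed
  then show ?thesis using assms unfolding fin_supp_def by (meson finite_UnI finite_imageI finite_subset)
qed

definition mx :: "('a \<Rightarrow> bool list) \<Rightarrow> ('a \<Rightarrow> bool list) \<Rightarrow> 'a \<Rightarrow> bool list" where
  "mx b c u = (if length (b u) \<le> length (c u) then c u else b u)"

lemma prefix_common: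
  assumes "is_prefix w x" "is_prefix v x" "length w \<le> length v"
  shows "pfx w v"
  unfolding pfx_def
  using assms by (intro nth_equalityI) (auto simp: is_prefix_def)

lemma brick_inter:
  assumes "x \<in> brick b" "x \<in> brick c"
  shows "brick b \<inter> brick c = brick (mx b c)" "\<And>u. pfx (b u) (mx b c u)" "\<And>u. pfx (c u) (mx b c u)"
proof -
  have xb: "is_prefix (b u) (x u)" and xc: "is_prefix (c u) (x u)" for u
    using assms by (auto simp: brick_def)
  show pb: "pfx (b u) (mx b c u)" for u
    using prefix_common[OF xb xc] by (auto simp: mx_def pfx_def)
  show pc: "pfx (c u) (mx b c u)" for u
    using prefix_common[OF xc xb] by (auto simp: mx_def pfx_def)
  show "brick b \<inter> brick c = brick (mx b c)"
  proof
    show "brick (mx b c) \<subseteq> brick b \<inter> brick c" using brick_mono pb pc by blast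
    show "brick b \<inter> brick c \<subseteq> brick (mx b c)"
      by (auto simp: brick_def mx_def)
  qed
qed

lemma fin_supp_mx: "fin_supp b \<Longrightarrow> fin_supp c \<Longrightarrow> fin_supp (mx b c)"
  unfolding fin_supp_def
  by (rule finite_subset[of _ "{u. b u \<noteq> []} \<union> {u. c u \<noteq> []}"]) (auto simp: mx_def)

lemma topspace_cantor [simp]: "topspace cantor_top = UNIV"
  by (simp add: cantor_top_def)

lemma topspace_cube [simp]: "topspace cube_top = UNIV"
  by (simp add: cube_top_def)

lemma cont_bit: "continuous_map cube_top (discrete_topology UNIV) (\<lambda>\<kappa>. \<kappa> u i)"
proof -
  have a: "continuous_map cube_top cantor_top (\<lambda>\<kappa>. \<kappa> u)"
    unfolding cube_top_def by (rule continuous_map_product_projection) simp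
  have b: "continuous_map cantor_top (discrete_topology UNIV) (\<lambda>x. x i)"
    unfolding cantor_top_def by (rule continuous_map_product_projection) simp
  show ?thesis using continuous_map_compose[OF a b] by (simp add: o_def)
qed

lemma cont_into_cube:
  assumes "\<And>u i. continuous_map X (discrete_topology UNIV) (\<lambda>x. f x u i)"
  shows "continuous_map X cube_top f"
  unfolding cube_top_def continuous_map_componentwise_UNIV
  by (simp add: cantor_top_def continuous_map_componentwise_UNIV assms)

lemma cont_twist: "continuous_map cube_top cube_top (twist \<phi> \<psi> \<gamma>)"
proof (rule cont_into_cube)
  fix u i
  show "continuous_map cube_top (discrete_topology UNIV) (\<lambda>x. twist \<phi> \<psi> \<gamma> x u i)"
  proof (cases "i < length (\<psi> u)")
    case True then show ?thesis by (simp add: twist_apply)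
  next
    case False then show ?thesis by (simp add: twist_apply cont_bit)
  qed
qed

lemma open_bitset: "openin cube_top {\<kappa>. \<kappa> u i = b}"
  using openin_continuous_map_preimage[OF cont_bit, of "{b}" u i] by simp

lemma open_brick:
  assumes "fin_supp \<phi>"
  shows "openin cube_top (brick \<phi>)"
proof -
  define P where "P = Sigma {u. \<phi> u \<noteq> []} (\<lambda>u. {..<length (\<phi> u)})"
  have fP: "finite P" using assms unfolding P_def fin_supp_def by auto
  show ?thesis
  proof (cases "P = {}")
    case True
    then have "\<phi> u = []" for u unfolding P_def by auto
    then have "brick \<phi> = topspace cube_top" by (auto simp: brick_def is_prefix_def)
    then show ?thesis by (metis openin_topspace)
  next
    case False
    have "\<kappa> \<in> brick \<phi> \<longleftrightarrow> (\<forall>p\<in>P. \<kappa> (fst p) (snd p) = \<phi> (fst p) ! snd p)" for \<kappa>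
    proof
      assume "\<kappa> \<in> brick \<phi>" then show "\<forall>p\<in>P. \<kappa> (fst p) (snd p) = \<phi> (fst p) ! snd p"
        unfolding brick_def is_prefix_def P_def by auto
    next
      assume a: "\<forall>p\<in>P. \<kappa> (fst p) (snd p) = \<phi> (fst p) ! snd p"
      have "is_prefix (\<phi> u) (\<kappa> u)" for u
        unfolding is_prefix_def
      proof (intro allI impI)
        fix i assume "i < length (\<phi> u)"
        then have "(u, i) \<in> P" unfolding P_def by auto
        then show "\<kappa> u i = \<phi> u ! i" using a by fastforce
      qed
      then show "\<kappa> \<in> brick \<phi>" by (simp add: brick_def)
    qed
    then have "brick \<phi> = (\<Inter>p\<in>P. {\<kappa>. \<kappa> (fst p) (snd p) = \<phi> (fst p) ! snd p})"
      by (intro Set.set_eqI) simp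
    then show ?thesis using False fP by (auto intro!: openin_INT2 open_bitset)
  qed
qed

lemma cont_piecewise:
  fixes h :: "('a \<Rightarrow> nat \<Rightarrow> bool) \<Rightarrow> ('a \<Rightarrow> nat \<Rightarrow> bool)"
    and T :: "(('a \<Rightarrow> bool list) \<times> ('a \<Rightarrow> bool list) \<times> ('a \<Rightarrow> 'a)) set"
  assumes "\<And>t. t \<in> T \<Longrightarrow> fin_supp (fst t)"
    and "\<And>t \<kappa>. t \<in> T \<Longrightarrow> \<kappa> \<in> brick (fst t) \<Longrightarrow> h \<kappa> = twist (fst t) (fst (snd t)) (snd (snd t)) \<kappa>"
    and "\<And>\<kappa>. \<exists>t\<in>T. \<kappa> \<in> brick (fst t)"
  shows "continuous_map cube_top cube_top h"
  unfolding continuous_map_def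
proof (intro conjI allI impI)
  show "h \<in> topspace cube_top \<rightarrow> topspace cube_top" by simp
  fix U :: "('a \<Rightarrow> nat \<Rightarrow> bool) set" assume U: "openin cube_top U"
  have "{x \<in> topspace cube_top. h x \<in> U} =
     (\<Union>t\<in>T. brick (fst t) \<inter> {x \<in> topspace cube_top. twist (fst t) (fst (snd t)) (snd (snd t)) x \<in> U})"
  proof (rule Set.set_eqI, rule iffI)
    fix x assume "x \<in> {x \<in> topspace cube_top. h x \<in> U}"
    then have hx: "h x \<in> U" by simp
    obtain t where t: "t \<in> T" "x \<in> brick (fst t)" using assms(3)[of x] by blast
    then show "x \<in> (\<Union>t\<in>T. brick (fst t) \<inter> {x \<in> topspace cube_top. twist (fst t) (fst (snd t)) (snd (snd t)) x \<in> U})"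
      using assms(2)[OF t] hx by auto
  next
    fix x assume "x \<in> (\<Union>t\<in>T. brick (fst t) \<inter> {x \<in> topspace cube_top. twist (fst t) (fst (snd t)) (snd (snd t)) x \<in> U})"
    then obtain t where t: "t \<in> T" "x \<in> brick (fst t)" "twist (fst t) (fst (snd t)) (snd (snd t)) x \<in> U" by blast
    then show "x \<in> {x \<in> topspace cube_top. h x \<in> U}"
      using assms(2)[OF t(1,2)] by simp
  qed
  also have "openin cube_top \<dots>"
  proof (rule openin_Union)
    fix S assume "S \<in> (\<lambda>t. brick (fst t) \<inter> {x \<in> topspace cube_top. twist (fst t) (fst (snd t)) (snd (snd t)) x \<in> U}) ` T"
    then obtain t where t: "t \<in> T" and S: "S = brick (fst t) \<inter> {x \<in> topspace cube_top. twist (fst t) (fst (snd t)) (snd (snd t)) x \<in> U}" by blast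
    show "openin cube_top S" unfolding S
      by (rule openin_Int[OF open_brick[OF assms(1)[OF t]] openin_continuous_map_preimage[OF cont_twist U]])
  qed
  finally show "openin cube_top {x \<in> topspace cube_top. h x \<in> U}" .
qed


type_synonym 'a trip = "('a \<Rightarrow> bool list) \<times> ('a \<Rightarrow> bool list) \<times> ('a \<Rightarrow> 'a)"

definition tdata :: "('a \<Rightarrow> 'a) set \<Rightarrow> (('a \<Rightarrow> nat \<Rightarrow> bool) \<Rightarrow> ('a \<Rightarrow> nat \<Rightarrow> bool)) \<Rightarrow> 'a trip set \<Rightarrow> bool" where
  "tdata G h T \<longleftrightarrow> finite T \<and>
    (\<forall>t\<in>T. fin_supp (fst t) \<and> fin_supp (fst (snd t)) \<and> snd (snd t) \<in> G \<and>
        (\<forall>\<kappa>\<in>brick (fst t). h \<kappa> = twist (fst t) (fst (snd t)) (snd (snd t)) \<kappa>)) \<and>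
    (\<forall>t\<in>T. \<forall>t'\<in>T. t \<noteq> t' \<longrightarrow> brick (fst t) \<inter> brick (fst t') = {}) \<and>
    (\<forall>\<kappa>. \<exists>t\<in>T. \<kappa> \<in> brick (fst t))"

definition timg :: "'a trip set \<Rightarrow> bool" where
  "timg T \<longleftrightarrow> (\<forall>t\<in>T. \<forall>t'\<in>T. t \<noteq> t' \<longrightarrow> brick (fst (snd t)) \<inter> brick (fst (snd t')) = {}) \<and>
    (\<forall>\<kappa>. \<exists>t\<in>T. \<kappa> \<in> brick (fst (snd t)))"

lemma tdataD:
  assumes "tdata G h T"
  shows "finite T" "\<And>t. t \<in> T \<Longrightarrow> fin_supp (fst t)" "\<And>t. t \<in> T \<Longrightarrow> fin_supp (fst (snd t))"
    "\<And>t. t \<in> T \<Longrightarrow> snd (snd t) \<in> G"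
    "\<And>t \<kappa>. t \<in> T \<Longrightarrow> \<kappa> \<in> brick (fst t) \<Longrightarrow> h \<kappa> = twist (fst t) (fst (snd t)) (snd (snd t)) \<kappa>"
    "\<And>t t'. t \<in> T \<Longrightarrow> t' \<in> T \<Longrightarrow> t \<noteq> t' \<Longrightarrow> brick (fst t) \<inter> brick (fst t') = {}"
    "\<And>\<kappa>. \<exists>t\<in>T. \<kappa> \<in> brick (fst t)"
  using assms unfolding tdata_def by blast+

lemma timgD:
  assumes "timg T"
  shows "\<And>t t'. t \<in> T \<Longrightarrow> t' \<in> T \<Longrightarrow> t \<noteq> t' \<Longrightarrow> brick (fst (snd t)) \<inter> brick (fst (snd t')) = {}"
    "\<And>\<kappa>. \<exists>t\<in>T. \<kappa> \<in> brick (fst (snd t))"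
  using assms unfolding timg_def by blast+

lemma brick_nonempty: "brick \<phi> \<noteq> {}"
  using brick_Phi by blast

lemma tdata_cont: "tdata G h T \<Longrightarrow> continuous_map cube_top cube_top h"
  unfolding tdata_def by (intro cont_piecewise[where T=T]) auto

lemma bij_hinv: "bij \<gamma> \<Longrightarrow> bij (hinv \<gamma>)"
  by (simp add: bij_imp_bij_inv)

lemma hinv_hinv: "bij \<gamma> \<Longrightarrow> hinv (hinv \<gamma>) = \<gamma>"
  by (simp add: inv_inv_eq)

lemma img_twist: "bij \<gamma> \<Longrightarrow> twist \<phi> \<psi> \<gamma> ` brick \<phi> = brick \<psi>"
proof
  assume b: "bij \<gamma>"
  show "twist \<phi> \<psi> \<gamma> ` brick \<phi> \<subseteq> brick \<psi>" using twist_in by blast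
  show "brick \<psi> \<subseteq> twist \<phi> \<psi> \<gamma> ` brick \<phi>"
  proof
    fix y assume y: "y \<in> brick \<psi>"
    have "twist \<phi> \<psi> (hinv (hinv \<gamma>)) (twist \<psi> \<phi> (hinv \<gamma>) y) = y"
      by (rule twist_inv[OF bij_hinv[OF b] y])
    then have "y = twist \<phi> \<psi> \<gamma> (twist \<psi> \<phi> (hinv \<gamma>) y)" using hinv_hinv[OF b] by simp
    then show "y \<in> twist \<phi> \<psi> \<gamma> ` brick \<phi>" using twist_in by blast
  qed
qed

lemma tdata_img:
  assumes G: "\<And>\<gamma>. \<gamma> \<in> G \<Longrightarrow> bij \<gamma>" and td: "tdata G h T" and t: "t \<in> T"
  shows "h ` brick (fst t) = brick (fst (snd t))"
proof -
  have "h ` brick (fst t) = twist (fst t) (fst (snd t)) (snd (snd t)) ` brick (fst t)"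
    using td t unfolding tdata_def by (intro image_cong) auto
  also have "\<dots> = brick (fst (snd t))" using td t G unfolding tdata_def by (intro img_twist) auto
  finally show ?thesis .
qed

lemma tdata_timg:
  assumes G: "\<And>\<gamma>. \<gamma> \<in> G \<Longrightarrow> bij \<gamma>" and td: "tdata G h T" and b: "bij h"
  shows "timg T"
  unfolding timg_def
proof (intro conjI ballI impI allI)
  fix t t' assume tt: "t \<in> T" "t' \<in> T" "t \<noteq> t'"
  have "brick (fst t) \<inter> brick (fst t') = {}" using td tt unfolding tdata_def by blast
  then have "h ` brick (fst t) \<inter> h ` brick (fst t') = {}" using b by (simp add: bij_is_inj image_Int[symmetric])
  then show "brick (fst (snd t)) \<inter> brick (fst (snd t')) = {}" using tdata_img[OF G td] tt by simp
next
  fix \<kappa>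
  obtain x where x: "\<kappa> = h x" using b by (metis bij_pointE)
  obtain t where t: "t \<in> T" "x \<in> brick (fst t)" using td unfolding tdata_def by blast
  then have "\<kappa> \<in> brick (fst (snd t))" using tdata_img[OF G td t(1)] x by blast
  then show "\<exists>t\<in>T. \<kappa> \<in> brick (fst (snd t))" using t by blast
qed

definition pw :: "'a trip set \<Rightarrow> ('a \<Rightarrow> nat \<Rightarrow> bool) \<Rightarrow> ('a \<Rightarrow> nat \<Rightarrow> bool)" where
  "pw T \<kappa> = (let t = (SOME t. t \<in> T \<and> \<kappa> \<in> brick (fst t)) in twist (fst t) (fst (snd t)) (snd (snd t)) \<kappa>)"

lemma pw_eq:
  assumes disj: "\<And>t t'. t \<in> T \<Longrightarrow> t' \<in> T \<Longrightarrow> t \<noteq> t' \<Longrightarrow> brick (fst t) \<inter> brick (fst t') = {}"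
    and t: "t \<in> T" "\<kappa> \<in> brick (fst t)"
  shows "pw T \<kappa> = twist (fst t) (fst (snd t)) (snd (snd t)) \<kappa>"
proof -
  have "(SOME t. t \<in> T \<and> \<kappa> \<in> brick (fst t)) = t"
  proof (rule some_equality)
    show "t \<in> T \<and> \<kappa> \<in> brick (fst t)" using t by blast
    fix t' assume "t' \<in> T \<and> \<kappa> \<in> brick (fst t')"
    then show "t' = t" using disj[of t' t] t by blast
  qed
  then show ?thesis by (simp add: pw_def)
qed

lemma pw_tdata:
  assumes "finite T" "\<And>t. t \<in> T \<Longrightarrow> fin_supp (fst t) \<and> fin_supp (fst (snd t)) \<and> snd (snd t) \<in> G"
    and disj: "\<And>t t'. t \<in> T \<Longrightarrow> t' \<in> T \<Longrightarrow> t \<noteq> t' \<Longrightarrow> brick (fst t) \<inter> brick (fst t') = {}"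
    and cov: "\<And>\<kappa>. \<exists>t\<in>T. \<kappa> \<in> brick (fst t)"
  shows "tdata G (pw T) T"
  unfolding tdata_def using assms pw_eq[OF disj] by blast

definition sw :: "'a trip set \<Rightarrow> 'a trip set" where
  "sw T = (\<lambda>t. (fst (snd t), fst t, hinv (snd (snd t)))) ` T"

lemma homeo_tdata:
  assumes G: "\<And>\<gamma>. \<gamma> \<in> G \<Longrightarrow> bij \<gamma>" and td: "tdata G h T" and ti: "timg T"
  shows "homeomorphic_map cube_top cube_top h"
    "tdata (hinv ` G) (pw (sw T)) (sw T)"
    "\<And>x. pw (sw T) (h x) = x" "\<And>y. h (pw (sw T) y) = y"
proof -
  have disj: "\<And>t t'. t \<in> sw T \<Longrightarrow> t' \<in> sw T \<Longrightarrow> t \<noteq> t' \<Longrightarrow> brick (fst t) \<inter> brick (fst t') = {}"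
  proof -
    fix t t' assume a: "t \<in> sw T" "t' \<in> sw T" "t \<noteq> t'"
    then obtain a b where ab: "a \<in> T" "b \<in> T" "t = (fst (snd a), fst a, hinv (snd (snd a)))"
        "t' = (fst (snd b), fst b, hinv (snd (snd b)))" unfolding sw_def by blast
    then have "a \<noteq> b" using a(3) by blast
    then show "brick (fst t) \<inter> brick (fst t') = {}" using ti ab unfolding timg_def by simp
  qed
  show td2: "tdata (hinv ` G) (pw (sw T)) (sw T)"
  proof (rule pw_tdata)
    show "finite (sw T)" using td by (simp add: tdata_def sw_def)
    show "\<And>t. t \<in> sw T \<Longrightarrow> fin_supp (fst t) \<and> fin_supp (fst (snd t)) \<and> snd (snd t) \<in> hinv ` G"
      using td unfolding tdata_def sw_def by auto
    show "\<And>\<kappa>. \<exists>t\<in>sw T. \<kappa> \<in> brick (fst t)" using ti unfolding timg_def sw_def by auto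
  qed (use disj in blast)
  show hx: "pw (sw T) (h x) = x" for x
  proof -
    obtain t where t: "t \<in> T" "x \<in> brick (fst t)" using td unfolding tdata_def by blast
    have hx: "h x = twist (fst t) (fst (snd t)) (snd (snd t)) x" using td t unfolding tdata_def by blast
    have st: "(fst (snd t), fst t, hinv (snd (snd t))) \<in> sw T" using t by (simp add: sw_def)
    have "pw (sw T) (h x) = twist (fst (snd t)) (fst t) (hinv (snd (snd t))) (h x)"
      using pw_eq[OF disj st] hx twist_in by fastforce
    also have "\<dots> = x" unfolding hx using G td t unfolding tdata_def by (intro twist_inv) auto
    finally show ?thesis .
  qed
  show hy: "h (pw (sw T) y) = y" for y
  proof -
    obtain t where t: "t \<in> T" "y \<in> brick (fst (snd t))" using ti unfolding timg_def by blast
    have st: "(fst (snd t), fst t, hinv (snd (snd t))) \<in> sw T" using t by (simp add: sw_def)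
    have gy: "pw (sw T) y = twist (fst (snd t)) (fst t) (hinv (snd (snd t))) y"
      using pw_eq[OF disj st] t by simp
    have bg: "bij (snd (snd t))" using G td t unfolding tdata_def by auto
    have "h (pw (sw T) y) = twist (fst t) (fst (snd t)) (snd (snd t)) (pw (sw T) y)"
      using td t gy twist_in unfolding tdata_def by metis
    also have "\<dots> = twist (fst t) (fst (snd t)) (hinv (hinv (snd (snd t)))) (twist (fst (snd t)) (fst t) (hinv (snd (snd t))) y)"
      using gy hinv_hinv[OF bg] by simp
    also have "\<dots> = y" by (rule twist_inv[OF bij_hinv[OF bg] t(2)])
    finally show ?thesis .
  qed
  show "homeomorphic_map cube_top cube_top h"
    unfolding homeomorphic_map_maps homeomorphic_maps_def
    using tdata_cont[OF td] tdata_cont[OF td2] hx hy by blast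
qed


lemma homeo_bij: "homeomorphic_map cube_top cube_top h \<Longrightarrow> bij h"
  using homeomorphic_imp_injective_map[of cube_top cube_top h] homeomorphic_imp_surjective_map[of cube_top cube_top h]
  by (simp add: bij_def)

lemma SVG_iff:
  assumes G: "\<And>\<gamma>. \<gamma> \<in> G \<Longrightarrow> bij \<gamma>"
  shows "h \<in> SVG G \<longleftrightarrow> homeomorphic_map cube_top cube_top h \<and> (\<exists>T. tdata G h T)"
proof
  assume "h \<in> SVG G"
  then obtain n \<phi> \<psi> \<gamma> where hom: "homeomorphic_map cube_top cube_top h"
    and bp: "brick_partition \<phi> n" "brick_partition \<psi> n" and g: "\<forall>i<n. \<gamma> i \<in> G"
    and ag: "\<forall>i<n. \<forall>\<kappa>\<in>brick (\<phi> i). h \<kappa> = twist (\<phi> i) (\<psi> i) (\<gamma> i) \<kappa>"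
    unfolding SVG_def by blast
  define T where "T = (\<lambda>i. (\<phi> i, \<psi> i, \<gamma> i)) ` {..<n}"
  have A: "finite T" by (simp add: T_def)
  have B: "\<forall>t\<in>T. fin_supp (fst t) \<and> fin_supp (fst (snd t)) \<and> snd (snd t) \<in> G \<and>
        (\<forall>\<kappa>\<in>brick (fst t). h \<kappa> = twist (fst t) (fst (snd t)) (snd (snd t)) \<kappa>)"
  proof
    fix t assume "t \<in> T"
    then obtain i where i: "i < n" "t = (\<phi> i, \<psi> i, \<gamma> i)" unfolding T_def by blast
    show "fin_supp (fst t) \<and> fin_supp (fst (snd t)) \<and> snd (snd t) \<in> G \<and>
        (\<forall>\<kappa>\<in>brick (fst t). h \<kappa> = twist (fst t) (fst (snd t)) (snd (snd t)) \<kappa>)"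
      using bp g ag i unfolding brick_partition_def by simp
  qed
  have C: "\<forall>t\<in>T. \<forall>t'\<in>T. t \<noteq> t' \<longrightarrow> brick (fst t) \<inter> brick (fst t') = {}"
  proof (intro ballI impI)
    fix t t' assume "t \<in> T" "t' \<in> T" "t \<noteq> t'"
    then obtain i j where "i < n" "t = (\<phi> i, \<psi> i, \<gamma> i)" "j < n" "t' = (\<phi> j, \<psi> j, \<gamma> j)" "i \<noteq> j"
      unfolding T_def by blast
    then show "brick (fst t) \<inter> brick (fst t') = {}" using bp unfolding brick_partition_def by simp
  qed
  have D: "\<forall>\<kappa>. \<exists>t\<in>T. \<kappa> \<in> brick (fst t)"
  proof
    fix \<kappa>
    have "\<kappa> \<in> (\<Union>i<n. brick (\<phi> i))" using bp unfolding brick_partition_def by simp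
    then obtain i where "i < n" "\<kappa> \<in> brick (\<phi> i)" by blast
    then show "\<exists>t\<in>T. \<kappa> \<in> brick (fst t)" unfolding T_def by force
  qed
  have "tdata G h T" unfolding tdata_def using A B C D by blast
  then show "homeomorphic_map cube_top cube_top h \<and> (\<exists>T. tdata G h T)" using hom by blast
next
  assume "homeomorphic_map cube_top cube_top h \<and> (\<exists>T. tdata G h T)"
  then obtain T where hom: "homeomorphic_map cube_top cube_top h" and td: "tdata G h T" by blast
  have ti: "timg T" using tdata_timg[OF G td homeo_bij[OF hom]] .
  obtain e where e: "bij_betw e {0..<card T} T" using ex_bij_betw_nat_finite[OF tdataD(1)[OF td]] by blast
  define n where "n = card T"
  have eT: "i < n \<Longrightarrow> e i \<in> T" for i using e unfolding n_def by (simp add: bij_betw_apply)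
  have einj: "i < n \<Longrightarrow> j < n \<Longrightarrow> i \<noteq> j \<Longrightarrow> e i \<noteq> e j" for i j
    using e unfolding n_def bij_betw_def inj_on_def by auto
  have esurj: "t \<in> T \<Longrightarrow> \<exists>i<n. e i = t" for t
    using e unfolding n_def bij_betw_def by force
  have bp1: "brick_partition (\<lambda>i. fst (e i)) n"
    unfolding brick_partition_def
  proof (intro conjI allI impI)
    show "fin_supp (fst (e i))" if "i < n" for i using tdataD(2)[OF td eT[OF that]] .
    show "brick (fst (e i)) \<inter> brick (fst (e j)) = {}" if "i < n" "j < n" "i \<noteq> j" for i j
      using tdataD(6)[OF td eT[OF that(1)] eT[OF that(2)] einj[OF that]] .
    show "(\<Union>i<n. brick (fst (e i))) = UNIV"
    proof (rule Set.set_eqI, rule iffI)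
      fix \<kappa> :: "'a \<Rightarrow> nat \<Rightarrow> bool"
      obtain t where "t \<in> T" "\<kappa> \<in> brick (fst t)" using tdataD(7)[OF td] by blast
      then show "\<kappa> \<in> (\<Union>i<n. brick (fst (e i)))" using esurj by blast
    qed simp
  qed
  have bp2: "brick_partition (\<lambda>i. fst (snd (e i))) n"
    unfolding brick_partition_def
  proof (intro conjI allI impI)
    show "fin_supp (fst (snd (e i)))" if "i < n" for i using tdataD(3)[OF td eT[OF that]] .
    show "brick (fst (snd (e i))) \<inter> brick (fst (snd (e j))) = {}" if "i < n" "j < n" "i \<noteq> j" for i j
      using timgD(1)[OF ti eT[OF that(1)] eT[OF that(2)] einj[OF that]] .
    show "(\<Union>i<n. brick (fst (snd (e i)))) = UNIV"
    proof (rule Set.set_eqI, rule iffI)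
      fix \<kappa> :: "'a \<Rightarrow> nat \<Rightarrow> bool"
      obtain t where "t \<in> T" "\<kappa> \<in> brick (fst (snd t))" using timgD(2)[OF ti] by blast
      then show "\<kappa> \<in> (\<Union>i<n. brick (fst (snd (e i))))" using esurj by blast
    qed simp
  qed
  have g: "\<forall>i<n. snd (snd (e i)) \<in> G" using tdataD(4)[OF td] eT by blast
  have ag: "\<forall>i<n. \<forall>\<kappa>\<in>brick (fst (e i)). h \<kappa> = twist (fst (e i)) (fst (snd (e i))) (snd (snd (e i))) \<kappa>"
    using tdataD(5)[OF td] eT by blast
  have "\<exists>n \<phi> \<psi> \<gamma>. brick_partition \<phi> n \<and> brick_partition \<psi> n \<and> (\<forall>i<n. \<gamma> i \<in> G) \<and>
        (\<forall>i<n. \<forall>\<kappa>\<in>brick (\<phi> i). h \<kappa> = twist (\<phi> i) (\<psi> i) (\<gamma> i) \<kappa>)"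
    using bp1 bp2 g ag by (intro exI[of _ n] exI[of _ "\<lambda>i. fst (e i)"] exI[of _ "\<lambda>i. fst (snd (e i))"]
       exI[of _ "\<lambda>i. snd (snd (e i))"]) simp
  then show "h \<in> SVG G" unfolding SVG_def using hom by simp
qed





definition grp :: "('a \<Rightarrow> 'a) set \<Rightarrow> bool" where
  "grp G \<longleftrightarrow> (\<forall>\<gamma>\<in>G. bij \<gamma>) \<and> id \<in> G \<and> (\<forall>a\<in>G. \<forall>b\<in>G. a \<circ> b \<in> G) \<and> (\<forall>a\<in>G. hinv a \<in> G)"

lemma grp_id: "grp {id}"
  by (simp add: grp_def inv_id)

lemma grp_subgroup:
  assumes "subgroup G (BijGroup (UNIV :: 'a set))"
  shows "grp G"
proof -
  interpret subgroup G "BijGroup (UNIV :: 'a set)" by fact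
  have sub: "G \<subseteq> Bij UNIV" using subset by (simp add: BijGroup_def)
  have b: "\<forall>\<gamma>\<in>G. bij \<gamma>" using sub by (auto simp: Bij_def)
  have "one (BijGroup (UNIV :: 'a set)) = id" by (simp add: BijGroup_def fun_eq_iff)
  then have i: "id \<in> G" using one_closed by metis
  have m: "a \<circ> b \<in> G" if "a \<in> G" "b \<in> G" for a b
  proof -
    have "a \<otimes>\<^bsub>BijGroup UNIV\<^esub> b = a \<circ> b"
      using that sub by (auto simp: BijGroup_def compose_def fun_eq_iff)
    then show ?thesis using m_closed[OF that] by metis
  qed
  have v: "hinv a \<in> G" if "a \<in> G" for a
  proof -
    have aB: "a \<in> Bij UNIV" using that sub by blast
    have "inv\<^bsub>BijGroup UNIV\<^esub> a = hinv a"
      by (simp add: inv_BijGroup[OF aB] fun_eq_iff)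
    then show ?thesis using m_inv_closed[OF that] by metis
  qed
  show ?thesis unfolding grp_def using b i m v by blast
qed

lemma grp_bij: "grp G \<Longrightarrow> \<gamma> \<in> G \<Longrightarrow> bij \<gamma>"
  by (simp add: grp_def)

lemma tdata_mono:
  assumes td: "tdata G h T" and sub: "G \<subseteq> G'"
  shows "tdata G' h T"
proof -
  note D = tdataD[OF td]
  have B: "\<forall>t\<in>T. fin_supp (fst t) \<and> fin_supp (fst (snd t)) \<and> snd (snd t) \<in> G' \<and>
        (\<forall>\<kappa>\<in>brick (fst t). h \<kappa> = twist (fst t) (fst (snd t)) (snd (snd t)) \<kappa>)"
    using D(2-5) sub by blast
  have C: "\<forall>t\<in>T. \<forall>t'\<in>T. t \<noteq> t' \<longrightarrow> brick (fst t) \<inter> brick (fst t') = {}" using D(6) by blast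
  show ?thesis unfolding tdata_def using D(1) B C D(7) by blast
qed

lemma SVG_inv:
  assumes G: "grp G" and h: "h \<in> SVG G"
  shows "hinv h \<in> SVG G"
proof -
  have Gb: "\<And>\<gamma>. \<gamma> \<in> G \<Longrightarrow> bij \<gamma>" using G unfolding grp_def by blast
  have "homeomorphic_map cube_top cube_top h \<and> (\<exists>T. tdata G h T)"
    using iffD1[OF SVG_iff[of G h, OF Gb] h] .
  then obtain T where hom: "homeomorphic_map cube_top cube_top h" and td: "tdata G h T" by blast
  have bh: "bij h" using homeo_bij[OF hom] .
  have ti: "timg T" using tdata_timg[of G, OF Gb td bh] .
  note H = homeo_tdata[of G, OF Gb td ti]
  have eq: "hinv h = pw (sw T)"
  proof
    fix y show "hinv h y = pw (sw T) y" using H(4)[of y] bh by (simp add: bij_is_inj inv_f_eq)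
  qed
  have sub: "hinv ` G \<subseteq> G" using G unfolding grp_def by blast
  have td2: "tdata G (pw (sw T)) (sw T)" by (rule tdata_mono[OF H(2) sub])
  have "homeomorphic_maps cube_top cube_top (pw (sw T)) h"
    unfolding homeomorphic_maps_def by (simp add: tdata_cont[OF td2] tdata_cont[OF td] H(3,4))
  then have "homeomorphic_map cube_top cube_top (pw (sw T))" by (meson homeomorphic_map_maps)
  then have "pw (sw T) \<in> SVG G" using iffD2[OF SVG_iff[of G "pw (sw T)", OF Gb]] td2 by blast
  then show ?thesis unfolding eq .
qed

lemma comp_piece:
  assumes bg: "bij \<gamma>" and bd: "bij \<delta>"
    and fa: "fin_supp a" and fd: "fin_supp d"
    and h1: "\<And>\<kappa>. \<kappa> \<in> brick a \<Longrightarrow> h1 \<kappa> = twist a b \<gamma> \<kappa>"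
    and h2: "\<And>\<kappa>. \<kappa> \<in> brick c \<Longrightarrow> h2 \<kappa> = twist c d \<delta> \<kappa>"
    and fb: "fin_supp b" and fc: "fin_supp c"
    and x: "x \<in> brick a" "h1 x \<in> brick c"
  shows "\<exists>e f. fin_supp e \<and> fin_supp f \<and> brick e = {x \<in> brick a. h1 x \<in> brick c} \<and>
          (\<forall>\<kappa>\<in>brick e. h2 (h1 \<kappa>) = twist e f (\<delta> \<circ> \<gamma>) \<kappa>)"
proof -
  have yb: "h1 x \<in> brick b" using h1[OF x(1)] twist_in by metis
  define m where "m = mx b c"
  note I = brick_inter[OF yb x(2), folded m_def]
  define e where "e = extn b a (hinv \<gamma>) m"
  define f where "f = extn c d \<delta> m"
  have fm: "fin_supp m" unfolding m_def using fin_supp_mx[OF fb fc] .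
  have fe: "fin_supp e" unfolding e_def by (rule fin_supp_extn[OF fa fm bij_hinv[OF bg]])
  have ff: "fin_supp f" unfolding f_def by (rule fin_supp_extn[OF fd fm bd])
  have pae: "\<And>u. pfx (a u) (e u)" unfolding e_def by (rule pfx_extn)
  have ea: "brick e \<subseteq> brick a" by (rule brick_mono) (rule pae)
  have em: "extn a b \<gamma> e = m"
  proof
    fix u
    have g1: "hinv (hinv \<gamma>) (hinv \<gamma> u) = u" using bg by (simp add: hinv_hinv bij_is_surj surj_f_inv_f)
    have eu: "e (hinv \<gamma> u) = a (hinv \<gamma> u) @ drop (length (b u)) (m u)"
      unfolding e_def extn_def g1 by simp
    have "extn a b \<gamma> e u = b u @ drop (length (b u)) (m u)"
      unfolding extn_def[of a b \<gamma> e] eu by simp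
    also have "\<dots> = m u" using I(2)[of u] unfolding pfx_def by (metis append_take_drop_id)
    finally show "extn a b \<gamma> e u = m u" .
  qed
  have C1: "\<And>\<kappa>. \<kappa> \<in> brick e \<Longrightarrow> h1 \<kappa> = twist e m \<gamma> \<kappa>"
  proof -
    fix \<kappa> assume k: "\<kappa> \<in> brick e"
    have "\<kappa> \<in> brick a" using ea k by blast
    then have "h1 \<kappa> = twist a b \<gamma> \<kappa>" by (rule h1)
    also have "\<dots> = twist e (extn a b \<gamma> e) \<gamma> \<kappa>" by (rule twist_restrict[OF pae k])
    finally show "h1 \<kappa> = twist e m \<gamma> \<kappa>" using em by simp
  qed
  have C2: "brick e = {x \<in> brick a. h1 x \<in> brick c}"
  proof (rule Set.set_eqI, rule iffI)
    fix \<kappa> assume k: "\<kappa> \<in> brick e"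
    have "\<kappa> \<in> brick a" using ea k by blast
    moreover have "h1 \<kappa> \<in> brick m" using C1[OF k] twist_in by metis
    moreover have "brick m \<subseteq> brick c" using I(1) by blast
    ultimately show "\<kappa> \<in> {x \<in> brick a. h1 x \<in> brick c}" by blast
  next
    fix \<kappa> assume "\<kappa> \<in> {x \<in> brick a. h1 x \<in> brick c}"
    then have k: "\<kappa> \<in> brick a" "h1 \<kappa> \<in> brick c" by auto
    define y where "y = twist a b \<gamma> \<kappa>"
    have yb: "y \<in> brick b" unfolding y_def by (rule twist_in)
    have "h1 \<kappa> = y" unfolding y_def by (rule h1[OF k(1)])
    then have ym: "y \<in> brick m" using yb k(2) I(1) by blast
    have "\<kappa> = twist b a (hinv \<gamma>) y" unfolding y_def using twist_inv[OF bg k(1)] by simp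
    also have "\<dots> = twist m e (hinv \<gamma>) y" unfolding e_def by (rule twist_restrict[OF I(2) ym])
    finally show "\<kappa> \<in> brick e" using twist_in by metis
  qed
  have C3: "\<forall>\<kappa>\<in>brick e. h2 (h1 \<kappa>) = twist e f (\<delta> \<circ> \<gamma>) \<kappa>"
  proof
    fix \<kappa> assume k: "\<kappa> \<in> brick e"
    define y where "y = twist e m \<gamma> \<kappa>"
    have ym: "y \<in> brick m" unfolding y_def by (rule twist_in)
    then have yc: "y \<in> brick c" using I(1) by blast
    have "h2 (h1 \<kappa>) = h2 y" using C1[OF k] y_def by simp
    also have "\<dots> = twist c d \<delta> y" by (rule h2[OF yc])
    also have "\<dots> = twist m f \<delta> y" unfolding f_def by (rule twist_restrict[OF I(3) ym])
    also have "\<dots> = twist e f (\<delta> \<circ> \<gamma>) \<kappa>" unfolding y_def by (rule twist_comp[OF bg bd])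
    finally show "h2 (h1 \<kappa>) = twist e f (\<delta> \<circ> \<gamma>) \<kappa>" .
  qed
  show ?thesis by (rule exI[of _ e], rule exI[of _ f]) (use fe ff C2 C3 in simp)
qed


lemma tdata_comp:
  assumes G: "grp G" and td1: "tdata G h1 T1" and td2: "tdata G h2 T2"
  shows "\<exists>T. tdata G (h2 \<circ> h1) T"
proof -
  note D1 = tdataD[OF td1] and D2 = tdataD[OF td2]
  define R where "R p = {x \<in> brick (fst (fst p)). h1 x \<in> brick (fst (snd p))}" for p :: "'a trip \<times> 'a trip"
  define P where "P = {p \<in> T1 \<times> T2. R p \<noteq> {}}"
  define Q where "Q p t \<longleftrightarrow> fin_supp (fst t) \<and> fin_supp (fst (snd t)) \<and> snd (snd t) \<in> G \<and>
     brick (fst t) = R p \<and> (\<forall>\<kappa>\<in>brick (fst t). (h2 \<circ> h1) \<kappa> = twist (fst t) (fst (snd t)) (snd (snd t)) \<kappa>)"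
    for p t
  have ex: "\<forall>p\<in>P. \<exists>t. Q p t"
  proof
    fix p assume p: "p \<in> P"
    obtain t1 t2 where pp0: "p = (t1, t2)" by (cases p)
    then have pp: "p = (t1, t2)" "t1 \<in> T1" "t2 \<in> T2" using p unfolding P_def by auto
    obtain x where x: "x \<in> brick (fst t1)" "h1 x \<in> brick (fst t2)" using p pp unfolding P_def R_def by auto
    have g1: "snd (snd t1) \<in> G" and g2: "snd (snd t2) \<in> G" using D1(4)[OF pp(2)] D2(4)[OF pp(3)] .
    have bg: "bij (snd (snd t1))" and bd: "bij (snd (snd t2))" using grp_bij[OF G g1] grp_bij[OF G g2] .
    have gg: "snd (snd t2) \<circ> snd (snd t1) \<in> G" using G g1 g2 unfolding grp_def by blast
    obtain e f where ef: "fin_supp e" "fin_supp f" "brick e = {x \<in> brick (fst t1). h1 x \<in> brick (fst t2)}"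
        "\<forall>\<kappa>\<in>brick e. h2 (h1 \<kappa>) = twist e f (snd (snd t2) \<circ> snd (snd t1)) \<kappa>"
      using comp_piece[OF bg bd D1(2)[OF pp(2)] D2(3)[OF pp(3)] D1(5)[OF pp(2)] D2(5)[OF pp(3)]
          D1(3)[OF pp(2)] D2(2)[OF pp(3)] x] by blast
    have "Q p (e, f, snd (snd t2) \<circ> snd (snd t1))"
      unfolding Q_def using ef gg by (simp add: R_def pp)
    then show "\<exists>t. Q p t" by blast
  qed
  obtain F where F: "\<forall>p\<in>P. Q p (F p)" using bchoice[OF ex] by blast
  define T where "T = F ` P"
  have fP: "finite P"
    by (rule finite_subset[of _ "T1 \<times> T2"]) (auto simp: P_def D1(1) D2(1))
  have A: "finite T" unfolding T_def using fP by simp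
  have B: "\<forall>t\<in>T. fin_supp (fst t) \<and> fin_supp (fst (snd t)) \<and> snd (snd t) \<in> G \<and>
        (\<forall>\<kappa>\<in>brick (fst t). (h2 \<circ> h1) \<kappa> = twist (fst t) (fst (snd t)) (snd (snd t)) \<kappa>)"
    using F unfolding T_def Q_def by blast
  have Rdisj: "R p \<inter> R q = {}" if "p \<in> P" "q \<in> P" "p \<noteq> q" for p q
  proof -
    obtain t1 t2 where pp0: "p = (t1, t2)" by (cases p)
    then have pp: "p = (t1, t2)" "t1 \<in> T1" "t2 \<in> T2" using that(1) unfolding P_def by auto
    obtain s1 s2 where qq0: "q = (s1, s2)" by (cases q)
    then have qq: "q = (s1, s2)" "s1 \<in> T1" "s2 \<in> T2" using that(2) unfolding P_def by auto
    show ?thesis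
    proof (cases "t1 = s1")
      case False
      then have "brick (fst t1) \<inter> brick (fst s1) = {}" using D1(6)[OF pp(2) qq(2)] by blast
      then show ?thesis unfolding R_def pp qq by auto
    next
      case True
      then have "t2 \<noteq> s2" using that(3) pp qq by auto
      then have "brick (fst t2) \<inter> brick (fst s2) = {}" using D2(6)[OF pp(3) qq(3)] by blast
      then show ?thesis unfolding R_def pp qq by auto
    qed
  qed
  have C: "\<forall>t\<in>T. \<forall>t'\<in>T. t \<noteq> t' \<longrightarrow> brick (fst t) \<inter> brick (fst t') = {}"
  proof (intro ballI impI)
    fix t t' assume "t \<in> T" "t' \<in> T" "t \<noteq> t'"
    then obtain p q where "p \<in> P" "q \<in> P" "t = F p" "t' = F q" "p \<noteq> q" unfolding T_def by blast
    moreover have "brick (fst (F p)) = R p" "brick (fst (F q)) = R q" using F calculation(1,2) unfolding Q_def by blast+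
    ultimately show "brick (fst t) \<inter> brick (fst t') = {}" using Rdisj by simp
  qed
  have Dc: "\<forall>\<kappa>. \<exists>t\<in>T. \<kappa> \<in> brick (fst t)"
  proof
    fix \<kappa>
    obtain t1 where t1: "t1 \<in> T1" "\<kappa> \<in> brick (fst t1)" using D1(7) by blast
    obtain t2 where t2: "t2 \<in> T2" "h1 \<kappa> \<in> brick (fst t2)" using D2(7) by blast
    have k: "\<kappa> \<in> R (t1, t2)" unfolding R_def using t1 t2 by simp
    then have p: "(t1, t2) \<in> P" unfolding P_def using t1 t2 by blast
    have "brick (fst (F (t1, t2))) = R (t1, t2)" using F p unfolding Q_def by blast
    then show "\<exists>t\<in>T. \<kappa> \<in> brick (fst t)" using k p unfolding T_def by blast
  qed
  have "tdata G (h2 \<circ> h1) T" unfolding tdata_def using A B C Dc by blast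
  then show ?thesis by blast
qed

lemma SVG_comp:
  assumes G: "grp G" and h1: "h1 \<in> SVG G" and h2: "h2 \<in> SVG G"
  shows "h2 \<circ> h1 \<in> SVG G"
proof -
  have Gb: "\<And>\<gamma>. \<gamma> \<in> G \<Longrightarrow> bij \<gamma>" using G unfolding grp_def by blast
  have "homeomorphic_map cube_top cube_top h1 \<and> (\<exists>T. tdata G h1 T)"
    using iffD1[OF SVG_iff[of G h1, OF Gb] h1] .
  then obtain T1 where hom1: "homeomorphic_map cube_top cube_top h1" and td1: "tdata G h1 T1" by blast
  have "homeomorphic_map cube_top cube_top h2 \<and> (\<exists>T. tdata G h2 T)"
    using iffD1[OF SVG_iff[of G h2, OF Gb] h2] .
  then obtain T2 where hom2: "homeomorphic_map cube_top cube_top h2" and td2: "tdata G h2 T2" by blast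
  have "homeomorphic_map cube_top cube_top (h2 \<circ> h1)" by (rule homeomorphic_map_compose[OF hom1 hom2])
  moreover have "\<exists>T. tdata G (h2 \<circ> h1) T" by (rule tdata_comp[OF G td1 td2])
  ultimately show ?thesis using iffD2[OF SVG_iff[of G "h2 \<circ> h1", OF Gb]] by blast
qed

lemma triv_brick: "brick (\<lambda>_. []) = UNIV"
  by (simp add: brick_def is_prefix_def)

lemma id_SVG:
  assumes G: "grp G"
  shows "id \<in> SVG G"
proof -
  have Gb: "\<And>\<gamma>. \<gamma> \<in> G \<Longrightarrow> bij \<gamma>" using G unfolding grp_def by blast
  have idG: "id \<in> G" using G unfolding grp_def by blast
  have "tdata G id {((\<lambda>_. []), (\<lambda>_. []), id)}"
    unfolding tdata_def using idG by (simp add: fin_supp_def triv_brick twist_same_id)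
  moreover have "homeomorphic_map cube_top cube_top id" by simp
  ultimately show ?thesis using iffD2[OF SVG_iff[of G id, OF Gb]] by blast
qed

lemma SVG_Bij: "h \<in> SVG G \<Longrightarrow> h \<in> Bij UNIV"
  unfolding SVG_def Bij_def using homeo_bij by (auto simp: bij_betw_def bij_def)

lemma SVG_subgroup:
  assumes G: "grp G"
  shows "subgroup (SVG G) (BijGroup (UNIV :: ('a \<Rightarrow> nat \<Rightarrow> bool) set))"
proof (rule subgroup.intro)
  show "SVG G \<subseteq> carrier (BijGroup UNIV)" using SVG_Bij by (auto simp: BijGroup_def)
  fix x y assume x: "x \<in> SVG G" and y: "y \<in> SVG G"
  have "x \<otimes>\<^bsub>BijGroup UNIV\<^esub> y = x \<circ> y"
    using SVG_Bij[OF x] SVG_Bij[OF y] by (auto simp: BijGroup_def compose_def fun_eq_iff)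
  then show "x \<otimes>\<^bsub>BijGroup UNIV\<^esub> y \<in> SVG G" using SVG_comp[OF G y x] by simp
next
  have "one (BijGroup (UNIV :: ('a \<Rightarrow> nat \<Rightarrow> bool) set)) = id" by (simp add: BijGroup_def fun_eq_iff)
  then show "\<one>\<^bsub>BijGroup UNIV\<^esub> \<in> SVG G" using id_SVG[OF G] by simp
next
  fix x assume x: "x \<in> SVG G"
  have "inv\<^bsub>BijGroup UNIV\<^esub> x = hinv x"
    by (simp add: inv_BijGroup[OF SVG_Bij[OF x]] fun_eq_iff)
  then show "inv\<^bsub>BijGroup UNIV\<^esub> x \<in> SVG G" using SVG_inv[OF G x] by simp
qed


definition zb :: "'a \<Rightarrow> bool \<Rightarrow> 'a \<Rightarrow> bool list" where
  "zb s b = (\<lambda>t. if t = s then [b] else [])"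

lemma brick_zb: "\<kappa> \<in> brick (zb s b) \<longleftrightarrow> \<kappa> s 0 = b"
  by (auto simp: brick_def is_prefix_def zb_def)

lemma fin_supp_zb: "fin_supp (zb s b)"
proof -
  have "{t. zb s b t \<noteq> []} = {s}" by (auto simp: zb_def)
  then show ?thesis by (simp add: fin_supp_def)
qed

lemma psi_s_zb: "psi_s s = zb s True"
  by (simp add: psi_s_def zb_def)

lemma zb_ne: "zb s True \<noteq> zb s False"
  by (simp add: zb_def fun_eq_iff)

lemma timg_diag: "(\<And>t. t \<in> T \<Longrightarrow> fst (snd t) = fst t) \<Longrightarrow> tdata G h T \<Longrightarrow> timg T"
  unfolding timg_def using tdataD(6,7) by metis

lemma iota_SVG:
  assumes G: "grp G" and g: "\<gamma> \<in> G"
  shows "iota1 s \<gamma> \<in> SVG G"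
proof -
  have Gb: "\<And>\<gamma>. \<gamma> \<in> G \<Longrightarrow> bij \<gamma>" using G unfolding grp_def by blast
  have idG: "id \<in> G" using G unfolding grp_def by blast
  define T where "T = {(zb s False, zb s False, id), (zb s True, zb s True, \<gamma>)}"
  have A: "finite T" by (simp add: T_def)
  have B: "\<forall>t\<in>T. fin_supp (fst t) \<and> fin_supp (fst (snd t)) \<and> snd (snd t) \<in> G \<and>
        (\<forall>\<kappa>\<in>brick (fst t). iota1 s \<gamma> \<kappa> = twist (fst t) (fst (snd t)) (snd (snd t)) \<kappa>)"
  proof
    fix t assume "t \<in> T"
    then consider "t = (zb s False, zb s False, id)" | "t = (zb s True, zb s True, \<gamma>)" unfolding T_def by blast
    then show "fin_supp (fst t) \<and> fin_supp (fst (snd t)) \<and> snd (snd t) \<in> G \<and>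
        (\<forall>\<kappa>\<in>brick (fst t). iota1 s \<gamma> \<kappa> = twist (fst t) (fst (snd t)) (snd (snd t)) \<kappa>)"
    proof cases
      case 1
      have "iota1 s \<gamma> \<kappa> = twist (zb s False) (zb s False) id \<kappa>" if "\<kappa> \<in> brick (zb s False)" for \<kappa>
        using that by (simp add: brick_zb iota1_def twist_same_id)
      then show ?thesis using 1 fin_supp_zb idG by simp
    next
      case 2
      have "iota1 s \<gamma> \<kappa> = twist (zb s True) (zb s True) \<gamma> \<kappa>" if "\<kappa> \<in> brick (zb s True)" for \<kappa>
        using that by (simp add: brick_zb iota1_def twist_def psi_s_zb)
      then show ?thesis using 2 fin_supp_zb g by simp
    qed
  qed
  have dz: "brick (zb s False) \<inter> brick (zb s True) = {}" by (auto simp: brick_zb)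
  have C: "\<forall>t\<in>T. \<forall>t'\<in>T. t \<noteq> t' \<longrightarrow> brick (fst t) \<inter> brick (fst t') = {}"
    unfolding T_def using dz by auto
  have D: "\<forall>\<kappa>. \<exists>t\<in>T. \<kappa> \<in> brick (fst t)"
    unfolding T_def by (auto simp: brick_zb)
  have td: "tdata G (iota1 s \<gamma>) T" unfolding tdata_def using A B C D by blast
  have ti: "timg T" by (rule timg_diag[OF _ td]) (auto simp: T_def)
  have "homeomorphic_map cube_top cube_top (iota1 s \<gamma>)" using homeo_tdata(1)[of G, OF Gb td ti] .
  then show ?thesis using iffD2[OF SVG_iff[of G "iota1 s \<gamma>", OF Gb]] td by blast
qed

lemma SV_SVG:
  assumes G: "grp G"
  shows "(SV :: (('a \<Rightarrow> nat \<Rightarrow> bool) \<Rightarrow> ('a \<Rightarrow> nat \<Rightarrow> bool)) set) \<subseteq> SVG G"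
proof
  fix h :: "('a \<Rightarrow> nat \<Rightarrow> bool) \<Rightarrow> ('a \<Rightarrow> nat \<Rightarrow> bool)" assume h: "h \<in> SV"
  have Gb: "\<And>\<gamma>. \<gamma> \<in> G \<Longrightarrow> bij \<gamma>" using G unfolding grp_def by blast
  have Ib: "\<And>\<gamma>. \<gamma> \<in> {id} \<Longrightarrow> bij \<gamma>" by simp
  have idG: "{id} \<subseteq> G" using G unfolding grp_def by blast
  have "homeomorphic_map cube_top cube_top h \<and> (\<exists>T. tdata {id} h T)"
    using iffD1[OF SVG_iff[of "{id}" h, OF Ib]] h unfolding SV_def by blast
  then obtain T where hom: "homeomorphic_map cube_top cube_top h" and td: "tdata {id} h T" by blast
  have "tdata G h T" by (rule tdata_mono[OF td idG])
  then show "h \<in> SVG G" using iffD2[OF SVG_iff[of G h, OF Gb]] hom by blast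
qed

lemma supset:
  assumes G: "grp G"
  shows "generate (BijGroup UNIV) (SV \<union> iota1 s ` G) \<subseteq> SVG G"
proof (rule group.generate_subgroup_incl[OF group_BijGroup])
  show "SV \<union> iota1 s ` G \<subseteq> SVG G" using SV_SVG[OF G] iota_SVG[OF G] by blast
  show "subgroup (SVG G) (BijGroup UNIV)" by (rule SVG_subgroup[OF G])
qed




definition ptr :: "(nat \<Rightarrow> 'a \<Rightarrow> bool list) \<Rightarrow> (nat \<Rightarrow> 'a \<Rightarrow> bool list) \<Rightarrow> (nat \<Rightarrow> 'a \<Rightarrow> 'a) \<Rightarrow> nat \<Rightarrow> 'a trip set" where
  "ptr \<phi> \<psi> \<gamma> n = (\<lambda>i. (\<phi> i, \<psi> i, \<gamma> i)) ` {..<n}"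

lemma part_SVG:
  assumes Gb: "\<And>\<gamma>. \<gamma> \<in> G \<Longrightarrow> bij \<gamma>" and bp1: "brick_partition \<phi> n" and bp2: "brick_partition \<psi> n"
    and g: "\<And>i. i < n \<Longrightarrow> \<gamma> i \<in> G"
  shows "pw (ptr \<phi> \<psi> \<gamma> n) \<in> SVG G"
    "\<And>i \<kappa>. i < n \<Longrightarrow> \<kappa> \<in> brick (\<phi> i) \<Longrightarrow> pw (ptr \<phi> \<psi> \<gamma> n) \<kappa> = twist (\<phi> i) (\<psi> i) (\<gamma> i) \<kappa>"
proof -
  define T where "T = ptr \<phi> \<psi> \<gamma> n"
  have disj: "\<And>t t'. t \<in> T \<Longrightarrow> t' \<in> T \<Longrightarrow> t \<noteq> t' \<Longrightarrow> brick (fst t) \<inter> brick (fst t') = {}"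
  proof -
    fix t t' assume "t \<in> T" "t' \<in> T" "t \<noteq> t'"
    then obtain i j where "i < n" "j < n" "t = (\<phi> i, \<psi> i, \<gamma> i)" "t' = (\<phi> j, \<psi> j, \<gamma> j)" "i \<noteq> j"
      unfolding T_def ptr_def by blast
    then show "brick (fst t) \<inter> brick (fst t') = {}" using bp1 unfolding brick_partition_def by simp
  qed
  have cov: "\<And>\<kappa>. \<exists>t\<in>T. \<kappa> \<in> brick (fst t)"
  proof -
    fix \<kappa>
    have "\<kappa> \<in> (\<Union>i<n. brick (\<phi> i))" using bp1 unfolding brick_partition_def by simp
    then obtain i where "i < n" "\<kappa> \<in> brick (\<phi> i)" by blast
    then show "\<exists>t\<in>T. \<kappa> \<in> brick (fst t)" unfolding T_def ptr_def by force
  qed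
  have fT: "finite T" by (simp add: T_def ptr_def)
  have lab: "\<And>t. t \<in> T \<Longrightarrow> fin_supp (fst t) \<and> fin_supp (fst (snd t)) \<and> snd (snd t) \<in> G"
  proof -
    fix t assume "t \<in> T"
    then obtain i where i: "i < n" "t = (\<phi> i, \<psi> i, \<gamma> i)" unfolding T_def ptr_def by blast
    then show "fin_supp (fst t) \<and> fin_supp (fst (snd t)) \<and> snd (snd t) \<in> G"
      using bp1 bp2 g[OF i(1)] unfolding brick_partition_def by simp
  qed
  have td: "tdata G (pw T) T" by (rule pw_tdata[OF fT lab disj cov])
  have ti: "timg T" unfolding timg_def
  proof (intro conjI ballI impI allI)
    fix t t' assume "t \<in> T" "t' \<in> T" "t \<noteq> t'"
    then obtain i j where "i < n" "j < n" "t = (\<phi> i, \<psi> i, \<gamma> i)" "t' = (\<phi> j, \<psi> j, \<gamma> j)" "i \<noteq> j"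
      unfolding T_def ptr_def by blast
    then show "brick (fst (snd t)) \<inter> brick (fst (snd t')) = {}" using bp2 unfolding brick_partition_def by simp
  next
    fix \<kappa>
    have "\<kappa> \<in> (\<Union>i<n. brick (\<psi> i))" using bp2 unfolding brick_partition_def by simp
    then obtain i where "i < n" "\<kappa> \<in> brick (\<psi> i)" by blast
    then show "\<exists>t\<in>T. \<kappa> \<in> brick (fst (snd t))" unfolding T_def ptr_def by force
  qed
  have "homeomorphic_map cube_top cube_top (pw T)" using homeo_tdata(1)[of G, OF Gb td ti] .
  then have "pw T \<in> SVG G" using iffD2[OF SVG_iff[of G "pw T", OF Gb]] td by blast
  then show "pw (ptr \<phi> \<psi> \<gamma> n) \<in> SVG G" unfolding T_def .
  fix i \<kappa> assume i: "i < n" "\<kappa> \<in> brick (\<phi> i)"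
  have "(\<phi> i, \<psi> i, \<gamma> i) \<in> T" using i(1) unfolding T_def ptr_def by blast
  from pw_eq[OF disj this] i(2) show "pw (ptr \<phi> \<psi> \<gamma> n) \<kappa> = twist (\<phi> i) (\<psi> i) (\<gamma> i) \<kappa>"
    unfolding T_def by simp
qed

definition sp :: "'a \<Rightarrow> nat \<Rightarrow> nat \<Rightarrow> 'a \<Rightarrow> bool list" where
  "sp s m k = (\<lambda>t. if t = s then replicate (Suc k) False @ (if Suc k < m then [True] else []) else [])"

definition alpha :: "'a \<Rightarrow> nat \<Rightarrow> nat \<Rightarrow> 'a \<Rightarrow> bool list" where
  "alpha s m k = (if k = 0 then zb s True else sp s m (k - 1))"

lemma brick_single: "\<kappa> \<in> brick (\<lambda>t. if t = s then w else []) \<longleftrightarrow> is_prefix w (\<kappa> s)"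
  by (auto simp: brick_def is_prefix_def)

lemma is_prefix_rep: "is_prefix (replicate n False) x \<longleftrightarrow> (\<forall>j<n. \<not> x j)"
  by (auto simp: is_prefix_def)

lemma is_prefix_rep1: "is_prefix (replicate n False @ [True]) x \<longleftrightarrow> (\<forall>j<n. \<not> x j) \<and> x n"
proof
  assume a: "is_prefix (replicate n False @ [True]) x"
  have a': "x i = (replicate n False @ [True]) ! i" if "i < Suc n" for i
    using a that unfolding is_prefix_def by simp
  have "\<not> x j" if "j < n" for j using a'[of j] that by (simp add: nth_append)
  moreover have "x n" using a'[of n] by (simp add: nth_append)
  ultimately show "(\<forall>j<n. \<not> x j) \<and> x n" by blast
next
  assume a: "(\<forall>j<n. \<not> x j) \<and> x n"
  have "x i = (replicate n False @ [True]) ! i" if i: "i < Suc n" for i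
  proof (cases "i < n")
    case True then show ?thesis using a by (simp add: nth_append)
  next
    case False then have "i = n" using i by simp
    then show ?thesis using a by (simp add: nth_append)
  qed
  then show "is_prefix (replicate n False @ [True]) x" unfolding is_prefix_def by simp
qed

lemma brick_sp: "\<kappa> \<in> brick (sp s m k) \<longleftrightarrow> (\<forall>j\<le>k. \<not> \<kappa> s j) \<and> (Suc k < m \<longrightarrow> \<kappa> s (Suc k))"
proof (cases "Suc k < m")
  case True
  have "sp s m k = (\<lambda>t. if t = s then replicate (Suc k) False @ [True] else [])" using True by (simp add: sp_def)
  then have "\<kappa> \<in> brick (sp s m k) \<longleftrightarrow> (\<forall>j<Suc k. \<not> \<kappa> s j) \<and> \<kappa> s (Suc k)"
    by (simp only: brick_single is_prefix_rep1)
  then show ?thesis using True by (simp add: less_Suc_eq_le)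
next
  case False
  have "sp s m k = (\<lambda>t. if t = s then replicate (Suc k) False else [])" using False unfolding sp_def by (simp only: if_False append_Nil2)
  then have "\<kappa> \<in> brick (sp s m k) \<longleftrightarrow> (\<forall>j<Suc k. \<not> \<kappa> s j)"
    by (simp only: brick_single is_prefix_rep)
  then show ?thesis using False by (simp add: less_Suc_eq_le)
qed

lemma fin_supp_single: "fin_supp (\<lambda>t. if t = s then w else [])"
  unfolding fin_supp_def by (rule finite_subset[of _ "{s}"]) auto

lemma fin_supp_sp: "fin_supp (sp s m k)"
  unfolding sp_def by (rule fin_supp_single)

lemma alpha_partition:
  assumes m: "m \<ge> 1"
  shows "brick_partition (alpha s m) (Suc m)"
  unfolding brick_partition_def
proof (intro conjI allI impI)
  fix i assume "i < Suc m"
  show "fin_supp (alpha s m i)"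
    by (simp add: alpha_def fin_supp_zb fin_supp_sp)
next
  fix i j assume ij: "i < Suc m" "j < Suc m" "i \<noteq> j"
  have key: "brick (alpha s m i) \<inter> brick (alpha s m j) = {}" if "i < j" "j < Suc m" for i j
  proof (cases "i = 0")
    case True
    then show ?thesis using that by (auto simp: alpha_def brick_zb brick_sp)
  next
    case False
    have "Suc (i - 1) < m" using that False by simp
    moreover have "Suc (i - 1) \<le> j - 1" using that False by simp
    ultimately show ?thesis using that False by (auto simp: alpha_def brick_sp)
  qed
  show "brick (alpha s m i) \<inter> brick (alpha s m j) = {}"
  proof (cases "i < j")
    case True then show ?thesis using key ij by blast
  next
    case False then have "j < i" using ij by simp
    then show ?thesis using key[of j i] ij by blast
  qed
next
  show "(\<Union>i<Suc m. brick (alpha s m i)) = UNIV"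
  proof (rule Set.set_eqI, rule iffI)
    fix \<kappa> :: "'a \<Rightarrow> nat \<Rightarrow> bool"
    show "\<kappa> \<in> (\<Union>i<Suc m. brick (alpha s m i))"
    proof (cases "\<kappa> s 0")
      case True
      then have "\<kappa> \<in> brick (alpha s m 0)" by (simp add: alpha_def brick_zb)
      then show ?thesis by blast
    next
      case F0: False
      show ?thesis
      proof (cases "\<exists>j. 0 < j \<and> j < m \<and> \<kappa> s j")
        case True
        define j0 where "j0 = (LEAST j. 0 < j \<and> j < m \<and> \<kappa> s j)"
        have j0: "0 < j0 \<and> j0 < m \<and> \<kappa> s j0" unfolding j0_def using True by (metis (mono_tags, lifting) LeastI)
        have mn: "\<not> \<kappa> s j" if "j < j0" for j
        proof (cases "j = 0")
          case True then show ?thesis using F0 by simp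
        next
          case False
          show ?thesis using not_less_Least[of j "\<lambda>j. 0 < j \<and> j < m \<and> \<kappa> s j"] that False j0 unfolding j0_def[symmetric]
            by auto
        qed
        have "\<kappa> \<in> brick (sp s m (j0 - 1))" unfolding brick_sp using j0 mn by auto
        then have "\<kappa> \<in> brick (alpha s m j0)" using j0 by (simp add: alpha_def)
        then show ?thesis using j0 by auto
      next
        case False
        have "\<kappa> \<in> brick (sp s m (m - 1))" unfolding brick_sp using False F0 m
          by (metis Suc_pred' gr0I le_imp_less_Suc less_one linorder_not_le order_less_le)
        then have "\<kappa> \<in> brick (alpha s m m)" using m by (simp add: alpha_def)
        then show ?thesis by auto
      qed
    qed
  qed simp
qed



lemma perm_partition:
  assumes bp: "brick_partition \<theta> n" and r1: "\<And>k. k < n \<Longrightarrow> r k < n" and r2: "inj_on r {..<n}"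
    and r3: "\<And>j. j < n \<Longrightarrow> \<exists>k<n. r k = j"
  shows "brick_partition (\<lambda>k. \<theta> (r k)) n"
  unfolding brick_partition_def
proof (intro conjI allI impI)
  fix k assume "k < n" then show "fin_supp (\<theta> (r k))" using bp r1 unfolding brick_partition_def by blast
next
  fix k l assume kl: "k < n" "l < n" "k \<noteq> l"
  then have "r k \<noteq> r l" using r2 unfolding inj_on_def by blast
  then show "brick (\<theta> (r k)) \<inter> brick (\<theta> (r l)) = {}" using bp r1 kl unfolding brick_partition_def by blast
next
  show "(\<Union>k<n. brick (\<theta> (r k))) = UNIV"
  proof (rule Set.set_eqI, rule iffI)
    fix \<kappa> :: "'a \<Rightarrow> nat \<Rightarrow> bool"
    have "\<kappa> \<in> (\<Union>j<n. brick (\<theta> j))" using bp unfolding brick_partition_def by simp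
    then obtain j where j: "j < n" "\<kappa> \<in> brick (\<theta> j)" by blast
    then obtain k where "k < n" "r k = j" using r3 by blast
    then show "\<kappa> \<in> (\<Union>k<n. brick (\<theta> (r k)))" using j by blast
  qed simp
qed

definition ridx :: "nat \<Rightarrow> nat \<Rightarrow> nat" where
  "ridx i k = (if k = 0 then i else if k - 1 < i then k - 1 else k)"

lemma ridx_partition:
  assumes bp: "brick_partition \<theta> n" and i: "i < n"
  shows "brick_partition (\<lambda>k. \<theta> (ridx i k)) n"
proof (rule perm_partition[OF bp])
  show "\<And>k. k < n \<Longrightarrow> ridx i k < n" using i by (auto simp: ridx_def)
  show "inj_on (ridx i) {..<n}" unfolding inj_on_def ridx_def by auto
  show "\<exists>k<n. ridx i k = j" if "j < n" for j
  proof (cases "j = i")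
    case True then show ?thesis using i by (intro exI[of _ 0]) (simp add: ridx_def)
  next
    case False
    show ?thesis
    proof (cases "j < i")
      case True then show ?thesis using i by (intro exI[of _ "Suc j"]) (simp add: ridx_def)
    next
      case F2: False
      then show ?thesis using False that by (intro exI[of _ j]) (auto simp: ridx_def)
    qed
  qed
qed

definition lt :: "('a \<Rightarrow> bool list) \<Rightarrow> ('a \<Rightarrow> 'a) \<Rightarrow> ('a \<Rightarrow> nat \<Rightarrow> bool) \<Rightarrow> ('a \<Rightarrow> nat \<Rightarrow> bool)" where
  "lt a \<gamma> \<kappa> = (if \<kappa> \<in> brick a then twist a a \<gamma> \<kappa> else \<kappa>)"

abbreviation GN :: "('a \<Rightarrow> 'a) set \<Rightarrow> 'a \<Rightarrow> (('a \<Rightarrow> nat \<Rightarrow> bool) \<Rightarrow> ('a \<Rightarrow> nat \<Rightarrow> bool)) set" where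
  "GN G s \<equiv> generate (BijGroup UNIV) (SV \<union> iota1 s ` G)"

lemma gen_facts:
  assumes G: "grp G"
  shows "\<And>x y. x \<in> GN G s \<Longrightarrow> y \<in> GN G s \<Longrightarrow> x \<circ> y \<in> GN G s"
    "\<And>x. x \<in> GN G s \<Longrightarrow> hinv x \<in> GN G s"
    "\<And>x. x \<in> SV \<Longrightarrow> x \<in> GN G s"
    "\<And>\<gamma>. \<gamma> \<in> G \<Longrightarrow> iota1 s \<gamma> \<in> GN G s"
proof -
  have H0: "SV \<union> iota1 s ` G \<subseteq> SVG G" using SV_SVG[OF G] iota_SVG[OF G] by blast
  have H1: "SV \<union> iota1 s ` G \<subseteq> Bij UNIV" using subset_trans[OF H0] SVG_Bij by blast
  have H: "SV \<union> iota1 s ` G \<subseteq> carrier (BijGroup UNIV)" using H1 by (simp add: BijGroup_def)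
  interpret sg: subgroup "GN G s" "BijGroup UNIV"
    by (rule group.generate_is_subgroup[OF group_BijGroup H])
  have sb: "x \<in> GN G s \<Longrightarrow> x \<in> Bij UNIV" for x using sg.subset by (auto simp: BijGroup_def)
  show "x \<circ> y \<in> GN G s" if "x \<in> GN G s" "y \<in> GN G s" for x y
  proof -
    have "x \<otimes>\<^bsub>BijGroup UNIV\<^esub> y = x \<circ> y"
      using sb[OF that(1)] sb[OF that(2)] by (auto simp: BijGroup_def compose_def fun_eq_iff)
    then show ?thesis using sg.m_closed[OF that] by simp
  qed
  show "hinv x \<in> GN G s" if "x \<in> GN G s" for x
  proof -
    have "inv\<^bsub>BijGroup UNIV\<^esub> x = hinv x"
      by (simp add: inv_BijGroup[OF sb[OF that]] fun_eq_iff)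
    then show ?thesis using sg.m_inv_closed[OF that] by simp
  qed
  show "x \<in> GN G s" if "x \<in> SV" for x using that by (auto intro: generate.incl)
  show "iota1 s \<gamma> \<in> GN G s" if "\<gamma> \<in> G" for \<gamma> using that by (auto intro: generate.incl)
qed


lemma iota_on_true: "\<kappa> s 0 \<Longrightarrow> iota1 s \<gamma> \<kappa> = twist (zb s True) (zb s True) \<gamma> \<kappa>"
  by (simp add: iota1_def twist_def psi_s_zb)

lemma iota_on_false: "\<not> \<kappa> s 0 \<Longrightarrow> iota1 s \<gamma> \<kappa> = \<kappa>"
  by (simp add: iota1_def)

lemma LT:
  assumes G: "grp G" and bp: "brick_partition \<theta> n" and n2: "n \<ge> 2" and i: "i < n" and g: "\<gamma> \<in> G"
  shows "lt (\<theta> i) \<gamma> \<in> GN G s"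
proof -
  define m where "m = n - 1"
  have nm: "n = Suc m" and m1: "m \<ge> 1" using n2 unfolding m_def by auto
  define \<alpha> where "\<alpha> = alpha s m"
  define \<beta> where "\<beta> = (\<lambda>k. \<theta> (ridx i k))"
  define a where "a = \<theta> i"
  have bpa: "brick_partition \<alpha> n" unfolding \<alpha>_def nm by (rule alpha_partition[OF m1])
  have bpb: "brick_partition \<beta> n" unfolding \<beta>_def by (rule ridx_partition[OF bp i])
  have b0: "\<beta> 0 = a" by (simp add: \<beta>_def a_def ridx_def)
  have a0: "\<alpha> 0 = zb s True" by (simp add: \<alpha>_def alpha_def)
  have Ib: "\<And>\<gamma>. \<gamma> \<in> {id} \<Longrightarrow> bij \<gamma>" by simp
  define f where "f = pw (ptr \<alpha> \<beta> (\<lambda>_. id) n)"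
  note PS = part_SVG[of "{id}", OF Ib bpa bpb, of "\<lambda>_. id", folded f_def]
  have fSV: "f \<in> SV" using PS(1) by (simp add: SV_def)
  have fag: "\<And>k \<kappa>. k < n \<Longrightarrow> \<kappa> \<in> brick (\<alpha> k) \<Longrightarrow> f \<kappa> = twist (\<alpha> k) (\<beta> k) id \<kappa>"
    using PS(2) by simp
  have bf: "bij f" using SVG_Bij[OF PS(1)] unfolding f_def by (simp add: Bij_def bij_betw_def bij_def)
  have bg: "bij \<gamma>" using grp_bij[OF G g] .
  have key: "lt a \<gamma> (f x) = f (iota1 s \<gamma> x)" for x
  proof (cases "x s 0")
    case True
    have xa: "x \<in> brick (\<alpha> 0)" using True a0 by (simp add: brick_zb)
    have fx: "f x = twist (\<alpha> 0) a id x" using fag[OF _ xa] nm b0 by simp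
    have ix: "iota1 s \<gamma> x = twist (\<alpha> 0) (\<alpha> 0) \<gamma> x" using iota_on_true[of x s, OF True] a0 by simp
    have "f (iota1 s \<gamma> x) = twist (\<alpha> 0) a id (twist (\<alpha> 0) (\<alpha> 0) \<gamma> x)"
      unfolding ix using fag[of 0, OF _ twist_in] nm b0 by simp
    also have "\<dots> = twist (\<alpha> 0) a (id \<circ> \<gamma>) x" by (rule twist_comp[OF bg bij_id])
    finally have r: "f (iota1 s \<gamma> x) = twist (\<alpha> 0) a \<gamma> x" by simp
    have "lt a \<gamma> (f x) = twist a a \<gamma> (twist (\<alpha> 0) a id x)" unfolding fx lt_def using twist_in[of "\<alpha> 0" a id x] by simp
    also have "\<dots> = twist (\<alpha> 0) a (\<gamma> \<circ> id) x" by (rule twist_comp[OF bij_id bg])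
    finally show ?thesis using r by simp
  next
    case False
    have ix: "iota1 s \<gamma> x = x" by (rule iota_on_false[of x s, OF False])
    have "x \<in> (\<Union>k<n. brick (\<alpha> k))" using bpa unfolding brick_partition_def by simp
    then obtain k where k: "k < n" "x \<in> brick (\<alpha> k)" by blast
    have k0: "k \<noteq> 0"
    proof
      assume "k = 0" then have "x \<in> brick (zb s True)" using k(2) a0 by simp
      then show False using False by (simp add: brick_zb)
    qed
    have "f x \<in> brick (\<beta> k)" using fag[OF k] twist_in by metis
    moreover have "brick (\<beta> k) \<inter> brick (\<beta> 0) = {}" using bpb k(1) k0 nm unfolding brick_partition_def by auto
    ultimately have "f x \<notin> brick a" using b0 by blast
    then show ?thesis unfolding lt_def ix by simp
  qed
  have eq: "lt a \<gamma> = f \<circ> (iota1 s \<gamma> \<circ> hinv f)"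
  proof
    fix y
    have "y = f (hinv f y)" using bf by (simp add: bij_is_surj surj_f_inv_f)
    then have "lt a \<gamma> y = lt a \<gamma> (f (hinv f y))" by simp
    also have "\<dots> = f (iota1 s \<gamma> (hinv f y))" by (rule key)
    finally show "lt a \<gamma> y = (f \<circ> (iota1 s \<gamma> \<circ> hinv f)) y" by simp
  qed
  note GF = gen_facts[OF G, where s=s]
  have "f \<circ> (iota1 s \<gamma> \<circ> hinv f) \<in> GN G s"
    by (intro GF(1) GF(3)[OF fSV] GF(4)[OF g] GF(2))
  then show ?thesis unfolding eq a_def[symmetric] .
qed


fun ltprod :: "(nat \<Rightarrow> 'a \<Rightarrow> bool list) \<Rightarrow> (nat \<Rightarrow> 'a \<Rightarrow> 'a) \<Rightarrow> nat \<Rightarrow> ('a \<Rightarrow> nat \<Rightarrow> bool) \<Rightarrow> ('a \<Rightarrow> nat \<Rightarrow> bool)" where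
  "ltprod \<phi> \<gamma> 0 = id"
| "ltprod \<phi> \<gamma> (Suc k) = ltprod \<phi> \<gamma> k \<circ> lt (\<phi> k) (\<gamma> k)"

lemma ltprod_on:
  assumes bp: "brick_partition \<phi> n" and j: "j < n"
  shows "k \<le> n \<Longrightarrow> \<kappa> \<in> brick (\<phi> j) \<Longrightarrow> ltprod \<phi> \<gamma> k \<kappa> = (if j < k then lt (\<phi> j) (\<gamma> j) \<kappa> else \<kappa>)"
proof (induction k arbitrary: \<kappa>)
  case 0 then show ?case by simp
next
  case (Suc k)
  then have kn: "k < n" "k \<le> n" by auto
  show ?case
  proof (cases "j = k")
    case True
    have y: "lt (\<phi> j) (\<gamma> j) \<kappa> \<in> brick (\<phi> j)" using Suc.prems(2) twist_in by (simp add: lt_def)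
    have "ltprod \<phi> \<gamma> (Suc k) \<kappa> = ltprod \<phi> \<gamma> k (lt (\<phi> j) (\<gamma> j) \<kappa>)" using True by simp
    also have "\<dots> = lt (\<phi> j) (\<gamma> j) \<kappa>"
      using Suc.IH[OF kn(2) y] True by simp
    finally show ?thesis using True by simp
  next
    case False
    have "\<kappa> \<notin> brick (\<phi> k)" using bp j kn(1) False Suc.prems(2) unfolding brick_partition_def by blast
    then have "lt (\<phi> k) (\<gamma> k) \<kappa> = \<kappa>" by (simp add: lt_def)
    then have "ltprod \<phi> \<gamma> (Suc k) \<kappa> = ltprod \<phi> \<gamma> k \<kappa>" by simp
    also have "\<dots> = (if j < k then lt (\<phi> j) (\<gamma> j) \<kappa> else \<kappa>)" using Suc.IH[OF kn(2) Suc.prems(2)] by simp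
    finally show ?thesis using False by auto
  qed
qed

lemma id_GN: "id \<in> GN G s"
proof -
  have "one (BijGroup (UNIV :: ('a \<Rightarrow> nat \<Rightarrow> bool) set)) = id" by (simp add: BijGroup_def fun_eq_iff)
  then show ?thesis using generate.one[of "BijGroup (UNIV :: ('a \<Rightarrow> nat \<Rightarrow> bool) set)" "SV \<union> iota1 s ` G"] by simp
qed

lemma ltprod_gen:
  assumes G: "grp G" and bp: "brick_partition \<phi> n" and n2: "n \<ge> 2" and g: "\<And>i. i < n \<Longrightarrow> \<gamma> i \<in> G"
  shows "k \<le> n \<Longrightarrow> ltprod \<phi> \<gamma> k \<in> GN G s"
proof (induction k)
  case 0 show ?case unfolding ltprod.simps(1) by (rule id_GN)
next
  case (Suc k)
  then have "k < n" by simp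
  then have "lt (\<phi> k) (\<gamma> k) \<in> GN G s" using LT[OF G bp n2 _ g] by blast
  moreover have "ltprod \<phi> \<gamma> k \<in> GN G s" using Suc by simp
  ultimately show ?case unfolding ltprod.simps(2) using gen_facts(1)[OF G] by blast
qed

lemma main_ge2:
  assumes G: "grp G" and bp1: "brick_partition \<phi> n" and bp2: "brick_partition \<psi> n" and n2: "n \<ge> 2"
    and g: "\<And>i. i < n \<Longrightarrow> \<gamma> i \<in> G"
    and ag: "\<And>i \<kappa>. i < n \<Longrightarrow> \<kappa> \<in> brick (\<phi> i) \<Longrightarrow> h \<kappa> = twist (\<phi> i) (\<psi> i) (\<gamma> i) \<kappa>"
  shows "h \<in> GN G s"
proof -
  have Ib: "\<And>\<gamma>. \<gamma> \<in> {id} \<Longrightarrow> bij \<gamma>" by simp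
  define gg where "gg = pw (ptr \<phi> \<psi> (\<lambda>_. id) n)"
  note PS = part_SVG[of "{id}", OF Ib bp1 bp2, of "\<lambda>_. id", folded gg_def]
  have gSV: "gg \<in> SV" using PS(1) by (simp add: SV_def)
  have gag: "\<And>i \<kappa>. i < n \<Longrightarrow> \<kappa> \<in> brick (\<phi> i) \<Longrightarrow> gg \<kappa> = twist (\<phi> i) (\<psi> i) id \<kappa>"
    using PS(2) by simp
  have eq: "h = gg \<circ> ltprod \<phi> \<gamma> n"
  proof
    fix \<kappa>
    have "\<kappa> \<in> (\<Union>i<n. brick (\<phi> i))" using bp1 unfolding brick_partition_def by simp
    then obtain j where j: "j < n" "\<kappa> \<in> brick (\<phi> j)" by blast
    have bg: "bij (\<gamma> j)" using grp_bij[OF G g[OF j(1)]] .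
    have "ltprod \<phi> \<gamma> n \<kappa> = lt (\<phi> j) (\<gamma> j) \<kappa>" using ltprod_on[OF bp1 j(1) _ j(2)] j(1) by simp
    also have "\<dots> = twist (\<phi> j) (\<phi> j) (\<gamma> j) \<kappa>" using j(2) by (simp add: lt_def)
    finally have lp: "ltprod \<phi> \<gamma> n \<kappa> = twist (\<phi> j) (\<phi> j) (\<gamma> j) \<kappa>" .
    have "gg (ltprod \<phi> \<gamma> n \<kappa>) = twist (\<phi> j) (\<psi> j) id (twist (\<phi> j) (\<phi> j) (\<gamma> j) \<kappa>)"
      unfolding lp using gag[OF j(1) twist_in] by simp
    also have "\<dots> = twist (\<phi> j) (\<psi> j) (id \<circ> \<gamma> j) \<kappa>" by (rule twist_comp[OF bg bij_id])
    also have "\<dots> = h \<kappa>" using ag[OF j] by simp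
    finally show "h \<kappa> = (gg \<circ> ltprod \<phi> \<gamma> n) \<kappa>" by simp
  qed
  have "gg \<circ> ltprod \<phi> \<gamma> n \<in> GN G s"
    using gen_facts(1)[OF G gen_facts(3)[OF G gSV] ltprod_gen[OF G bp1 n2 g order_refl]] .
  then show ?thesis unfolding eq .
qed


lemma img_partition:
  assumes bh: "bij h" and bp: "brick_partition \<phi> n" and fs: "\<And>i. i < n \<Longrightarrow> fin_supp (\<psi> i)"
    and bg: "\<And>i. i < n \<Longrightarrow> bij (\<gamma> i)"
    and ag: "\<And>i \<kappa>. i < n \<Longrightarrow> \<kappa> \<in> brick (\<phi> i) \<Longrightarrow> h \<kappa> = twist (\<phi> i) (\<psi> i) (\<gamma> i) \<kappa>"
  shows "brick_partition \<psi> n"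
proof -
  have img: "h ` brick (\<phi> i) = brick (\<psi> i)" if "i < n" for i
  proof -
    have "h ` brick (\<phi> i) = twist (\<phi> i) (\<psi> i) (\<gamma> i) ` brick (\<phi> i)"
      using ag[OF that] by (intro image_cong) auto
    also have "\<dots> = brick (\<psi> i)" by (rule img_twist[OF bg[OF that]])
    finally show ?thesis .
  qed
  show ?thesis unfolding brick_partition_def
  proof (intro conjI allI impI)
    show "fin_supp (\<psi> i)" if "i < n" for i using fs[OF that] .
    fix i j assume ij: "i < n" "j < n" "i \<noteq> j"
    have "brick (\<phi> i) \<inter> brick (\<phi> j) = {}" using bp ij unfolding brick_partition_def by blast
    then have "h ` brick (\<phi> i) \<inter> h ` brick (\<phi> j) = {}" using bh by (simp add: bij_is_inj image_Int[symmetric])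
    then show "brick (\<psi> i) \<inter> brick (\<psi> j) = {}" using img ij by simp
  next
    show "(\<Union>i<n. brick (\<psi> i)) = UNIV"
    proof (rule Set.set_eqI, rule iffI)
      fix \<kappa> :: "'a \<Rightarrow> nat \<Rightarrow> bool"
      obtain x where x: "\<kappa> = h x" using bh by (metis bij_pointE)
      have "x \<in> (\<Union>i<n. brick (\<phi> i))" using bp unfolding brick_partition_def by simp
      then obtain i where i: "i < n" "x \<in> brick (\<phi> i)" by blast
      then have "\<kappa> \<in> brick (\<psi> i)" using img[OF i(1)] x by blast
      then show "\<kappa> \<in> (\<Union>i<n. brick (\<psi> i))" using i by blast
    qed simp
  qed
qed

lemma brick_UNIV_triv:
  assumes "brick \<phi> = UNIV"
  shows "\<phi> u = []"
proof (rule ccontr)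
  assume ne: "\<phi> u \<noteq> []"
  define \<kappa> :: "'a \<Rightarrow> nat \<Rightarrow> bool" where "\<kappa> = (\<lambda>t i. \<not> (\<phi> u ! 0))"
  have "\<kappa> \<in> brick \<phi>" using assms by simp
  then have "\<kappa> u 0 = \<phi> u ! 0" using ne unfolding brick_def is_prefix_def by simp
  then show False unfolding \<kappa>_def by simp
qed

lemma zb_partition: "brick_partition (\<lambda>k. zb s (k \<noteq> 0)) 2"
  unfolding brick_partition_def
proof (intro conjI allI impI)
  show "fin_supp (zb s (i \<noteq> 0))" for i by (rule fin_supp_zb)
  fix i j :: nat assume ij: "i < 2" "j < 2" "i \<noteq> j"
  then have "(i \<noteq> 0) \<noteq> (j \<noteq> 0)" by auto
  then show "brick (zb s (i \<noteq> 0)) \<inter> brick (zb s (j \<noteq> 0)) = {}" by (auto simp: brick_zb)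
next
  show "(\<Union>i<2. brick (zb s (i \<noteq> (0::nat)))) = UNIV"
  proof (rule Set.set_eqI, rule iffI)
    fix \<kappa> :: "'a \<Rightarrow> nat \<Rightarrow> bool"
    show "\<kappa> \<in> (\<Union>i<2. brick (zb s (i \<noteq> (0::nat))))"
    proof (cases "\<kappa> s 0")
      case True
      then have "\<kappa> \<in> brick (zb s ((1::nat) \<noteq> 0))" by (simp add: brick_zb)
      then show ?thesis by (intro UN_I[of 1]) auto
    next
      case False
      then have "\<kappa> \<in> brick (zb s ((0::nat) \<noteq> 0))" by (simp add: brick_zb)
      then show ?thesis by (intro UN_I[of 0]) auto
    qed
  qed simp
qed

lemma main_one:
  assumes G: "grp G" and bh: "bij h" and bp1: "brick_partition \<phi> 1" and bp2: "brick_partition \<psi> 1"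
    and g: "\<gamma> 0 \<in> G"
    and ag: "\<And>\<kappa>. \<kappa> \<in> brick (\<phi> 0) \<Longrightarrow> h \<kappa> = twist (\<phi> 0) (\<psi> 0) (\<gamma> 0) \<kappa>"
  shows "h \<in> GN G s"
proof -
  have bU: "brick (\<phi> 0) = UNIV" using bp1 unfolding brick_partition_def by (simp add: lessThan_Suc)
  have triv: "\<phi> 0 u = []" for u by (rule brick_UNIV_triv[OF bU])
  have bg: "bij (\<gamma> 0)" by (rule grp_bij[OF G g])
  define \<phi>' where "\<phi>' = (\<lambda>k::nat. zb s (k \<noteq> 0))"
  define \<psi>' where "\<psi>' = (\<lambda>k. extn (\<phi> 0) (\<psi> 0) (\<gamma> 0) (\<phi>' k))"
  have bp1': "brick_partition \<phi>' 2" unfolding \<phi>'_def by (rule zb_partition)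
  have pf: "pfx (\<phi> 0 u) (\<phi>' k u)" for k u by (simp add: pfx_def triv)
  have ag': "h \<kappa> = twist (\<phi>' k) (\<psi>' k) (\<gamma> 0) \<kappa>" if "k < 2" "\<kappa> \<in> brick (\<phi>' k)" for k \<kappa>
  proof -
    have "h \<kappa> = twist (\<phi> 0) (\<psi> 0) (\<gamma> 0) \<kappa>" using ag bU by simp
    also have "\<dots> = twist (\<phi>' k) (\<psi>' k) (\<gamma> 0) \<kappa>" unfolding \<psi>'_def by (rule twist_restrict[OF pf that(2)])
    finally show ?thesis .
  qed
  have fs0: "fin_supp (\<psi> 0)" using bp2 unfolding brick_partition_def by simp
  have fs: "fin_supp (\<psi>' k)" for k
    unfolding \<psi>'_def \<phi>'_def by (rule fin_supp_extn[OF fs0 fin_supp_zb bg])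
  have bp2': "brick_partition \<psi>' 2"
    by (rule img_partition[OF bh bp1' fs bg ag'])
  show ?thesis by (rule main_ge2[OF G bp1' bp2' order_refl _ ag']) (rule g)
qed

theorem proposition3p1:
  fixes G :: "('a \<Rightarrow> 'a) set" and s :: 'a
  assumes "subgroup G (BijGroup (UNIV :: 'a set))"
  shows "SVG G = generate (BijGroup (UNIV :: (('a \<Rightarrow> nat \<Rightarrow> bool) set)))
                   (SV \<union> iota1 s ` G)"
proof (rule equalityI)
  have G: "grp G" by (rule grp_subgroup[OF assms])
  show "generate (BijGroup UNIV) (SV \<union> iota1 s ` G) \<subseteq> SVG G" by (rule supset[OF G])
  show "SVG G \<subseteq> generate (BijGroup UNIV) (SV \<union> iota1 s ` G)"
  proof
    fix h assume h: "h \<in> SVG G"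
    have bh: "bij h" using SVG_Bij[OF h] by (simp add: Bij_def bij_betw_def bij_def)
    from h obtain n \<phi> \<psi> \<gamma> where bp: "brick_partition \<phi> n" "brick_partition \<psi> n" and g: "\<forall>i<n. \<gamma> i \<in> G"
      and ag: "\<forall>i<n. \<forall>\<kappa>\<in>brick (\<phi> i). h \<kappa> = twist (\<phi> i) (\<psi> i) (\<gamma> i) \<kappa>"
      unfolding SVG_def by blast
    have n0: "n \<noteq> 0"
    proof
      assume "n = 0"
      then have "(\<Union>i<n. brick (\<phi> i)) = {}" by simp
      then show False using bp(1) unfolding brick_partition_def by simp
    qed
    show "h \<in> generate (BijGroup UNIV) (SV \<union> iota1 s ` G)"
    proof (cases "n = 1")
      case True
      have g0: "\<gamma> 0 \<in> G" using g True by simp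
      have ag0: "\<And>\<kappa>. \<kappa> \<in> brick (\<phi> 0) \<Longrightarrow> h \<kappa> = twist (\<phi> 0) (\<psi> 0) (\<gamma> 0) \<kappa>" using ag True by simp
      show ?thesis by (rule main_one[of G h \<phi> \<psi> \<gamma>, OF G bh bp(1)[unfolded True] bp(2)[unfolded True] g0 ag0])
    next
      case False
      then have "n \<ge> 2" using n0 by simp
      moreover have "\<And>i. i < n \<Longrightarrow> \<gamma> i \<in> G" using g by simp
      moreover have "\<And>i \<kappa>. i < n \<Longrightarrow> \<kappa> \<in> brick (\<phi> i) \<Longrightarrow> h \<kappa> = twist (\<phi> i) (\<psi> i) (\<gamma> i) \<kappa>"
        using ag by simp
      ultimately show ?thesis by (rule main_ge2[of G \<phi> n \<psi> \<gamma> h, OF G bp(1) bp(2)])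
    qed
  qed
qed


end
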